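(* Let $\mathcal{A}$ and $\mathcal{B}$ be von Neumann algebras, let $T:\mathcal{B}\to\mathcal{A}$ be a CP-map and let $B,\tilde B\in\mathcal{B}$ be commuting Hermitian elements. Put $(X,Y):=T(X^\dagger Y)-T(X)^\dagger T(Y)$ for $X,Y\in\mathcal{B}$, $A:=T(B)$, $\tilde A:=T(\tilde B)$, $\Sigma_B^2:=\|(B,B)\|$ and $\Sigma_{\tilde B}^2:=\|(\tilde B,\tilde B)\|$ (with $\Sigma_B,\Sigma_{\tilde B}\ge 0$). Then $$\Sigma_B\,\Sigma_{\tilde B}\ge \tfrac12\,\|[A,\tilde A]\|.$$
   Context: A CP-map $T:\mathcal{B}\to\mathcal{A}$ between von Neumann algebras is a linear, weakly continuous map with $T(\mathbf{1})=\mathbf{1}$ that is completely positive, i.e. $\mathrm{Id}_n\otimes T: M_n\otimes\mathcal{B}\to M_n\otimes\mathcal{A}$ is positive for every $n\in\mathbb{N}$. *)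

theory Defs
  imports "HOL-Analysis.Analysis"
begin

class cstar_algebra = real_normed_algebra_1 + banach +
  fixes scaleC :: "complex \<Rightarrow> 'a \<Rightarrow> 'a"
    and cstar :: "'a \<Rightarrow> 'a"
  assumes scaleC_add_right: "scaleC c (x + y) = scaleC c x + scaleC c y"
    and scaleC_add_left: "scaleC (c + d) x = scaleC c x + scaleC d x"
    and scaleC_scaleC: "scaleC c (scaleC d x) = scaleC (c * d) x"
    and scaleC_one: "scaleC 1 x = x"
    and scaleR_scaleC: "scaleR r x = scaleC (complex_of_real r) x"
    and scaleC_mult_left: "scaleC c x * y = scaleC c (x * y)"
    and scaleC_mult_right: "x * scaleC c y = scaleC c (x * y)"
    and norm_scaleC: "norm (scaleC c x) = cmod c * norm x"
    and cstar_add: "cstar (x + y) = cstar x + cstar y"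
    and cstar_scaleC: "cstar (scaleC c x) = scaleC (cnj c) (cstar x)"
    and cstar_mult: "cstar (x * y) = cstar y * cstar x"
    and cstar_cstar: "cstar (cstar x) = x"
    and cstar_identity: "norm (cstar x * x) = norm x * norm x"

section \<open>Preduals and von Neumann algebras (Sakai: C*-algebras that are dual Banach spaces)\<close>

definition bounded_functional :: "('a::cstar_algebra \<Rightarrow> complex) \<Rightarrow> bool" where
  "bounded_functional \<phi> \<longleftrightarrow>
     (\<forall>x y. \<phi> (x + y) = \<phi> x + \<phi> y) \<and> (\<forall>c x. \<phi> (scaleC c x) = c * \<phi> x) \<and>
     (\<exists>K. \<forall>x. cmod (\<phi> x) \<le> K * norm x)"

definition fnorm :: "('a::cstar_algebra \<Rightarrow> complex) \<Rightarrow> real" where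
  "fnorm \<phi> = Sup {cmod (\<phi> x) | x. norm x \<le> 1}"

text \<open>N is a predual of the C*-algebra: a norm-closed subspace of the dual such that
  the canonical map from the algebra into the dual of N is an isometric bijection.\<close>
definition is_predual :: "('a::cstar_algebra \<Rightarrow> complex) set \<Rightarrow> bool" where
  "is_predual N \<longleftrightarrow>
     N \<subseteq> {\<phi>. bounded_functional \<phi>} \<and>
     (\<lambda>x. 0) \<in> N \<and>
     (\<forall>\<phi>\<in>N. \<forall>\<psi>\<in>N. (\<lambda>x. \<phi> x + \<psi> x) \<in> N) \<and>
     (\<forall>\<phi>\<in>N. \<forall>c. (\<lambda>x. c * \<phi> x) \<in> N) \<and>
     (\<forall>\<phi>. bounded_functional \<phi> \<and> (\<forall>e>0. \<exists>\<psi>\<in>N. fnorm (\<lambda>x. \<phi> x - \<psi> x) < e) \<longrightarrow> \<phi> \<in> N) \<and>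
     (\<forall>a. norm a = Sup {cmod (\<phi> a) | \<phi>. \<phi> \<in> N \<and> fnorm \<phi> \<le> 1}) \<and>
     (\<forall>\<Psi> :: ('a \<Rightarrow> complex) \<Rightarrow> complex.
        (\<forall>\<phi>\<in>N. \<forall>\<psi>\<in>N. \<Psi> (\<lambda>x. \<phi> x + \<psi> x) = \<Psi> \<phi> + \<Psi> \<psi>) \<and>
        (\<forall>\<phi>\<in>N. \<forall>c. \<Psi> (\<lambda>x. c * \<phi> x) = c * \<Psi> \<phi>) \<and>
        (\<exists>K. \<forall>\<phi>\<in>N. cmod (\<Psi> \<phi>) \<le> K * fnorm \<phi>)
        \<longrightarrow> (\<exists>a. \<forall>\<phi>\<in>N. \<Psi> \<phi> = \<phi> a))"

definition von_neumann_algebra :: "'a::cstar_algebra itself \<Rightarrow> bool" where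
  "von_neumann_algebra _ \<longleftrightarrow> (\<exists>N :: ('a \<Rightarrow> complex) set. is_predual N)"

definition predual :: "('a::cstar_algebra \<Rightarrow> complex) set" where
  "predual = (SOME N. is_predual N)"

definition sigma_weak_topology :: "'a::cstar_algebra topology" where
  "sigma_weak_topology = topology_generated_by {\<phi> -` U | \<phi> U. \<phi> \<in> predual \<and> open U}"

definition positive_elem :: "'a::cstar_algebra \<Rightarrow> bool" where
  "positive_elem a \<longleftrightarrow> (\<exists>b. a = cstar b * b)"

text \<open>Elements of M_n(A) are represented as functions i j with i, j < n.
  X is positive in the C*-algebra M_n(A) iff X = Y* Y for some Y in M_n(A).\<close>
definition mat_positive :: "nat \<Rightarrow> (nat \<Rightarrow> nat \<Rightarrow> 'a::cstar_algebra) \<Rightarrow> bool" where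
  "mat_positive n X \<longleftrightarrow>
     (\<exists>Y. \<forall>i<n. \<forall>j<n. X i j = (\<Sum>k<n. cstar (Y k i) * Y k j))"

definition cp_map :: "('b::cstar_algebra \<Rightarrow> 'a::cstar_algebra) \<Rightarrow> bool" where
  "cp_map T \<longleftrightarrow>
     (\<forall>x y. T (x + y) = T x + T y) \<and> (\<forall>c x. T (scaleC c x) = scaleC c (T x)) \<and>
     continuous_map sigma_weak_topology sigma_weak_topology T \<and>
     T 1 = 1 \<and>
     (\<forall>n X. mat_positive n X \<longrightarrow> mat_positive n (\<lambda>i j. T (X i j)))"

definition cp_form :: "('b::cstar_algebra \<Rightarrow> 'a::cstar_algebra) \<Rightarrow> 'b \<Rightarrow> 'b \<Rightarrow> 'a" where
  "cp_form T X Y = T (cstar X * Y) - cstar (T X) * T Y"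

end

theory Submission
  imports Defs "HOL-Computational_Algebra.Formal_Power_Series"
begin

definition sc :: "complex \<Rightarrow> 'a::cstar_algebra" where
  "sc c = scaleC c 1"

definition herm :: "'a::cstar_algebra \<Rightarrow> bool" where
  "herm x \<longleftrightarrow> cstar x = x"

lemma scaleC_zero_left [simp]: "scaleC 0 (x::'a::cstar_algebra) = 0"
proof -
  have "scaleC 0 x = scaleC 0 x + scaleC 0 x"
    using scaleC_add_left[of 0 0 x] by simp
  then show ?thesis by simp
qed

lemma scaleC_zero_right [simp]: "scaleC c (0::'a::cstar_algebra) = 0"
proof -
  have "scaleC c (0::'a) = scaleC c 0 + scaleC c 0"
    using scaleC_add_right[of c "0::'a" 0] by simp
  then show ?thesis by simp
qed

lemma scaleC_eq_sc: "scaleC c (x::'a::cstar_algebra) = sc c * x"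
  by (simp add: sc_def scaleC_mult_left)

lemma scaleC_eq_sc': "scaleC c (x::'a::cstar_algebra) = x * sc c"
  by (simp add: sc_def scaleC_mult_right)

lemma sc_comm: "sc c * (x::'a::cstar_algebra) = x * sc c"
  by (metis scaleC_eq_sc scaleC_eq_sc')

lemma sc_add: "sc (c + d) = (sc c + sc d :: 'a::cstar_algebra)"
  by (simp add: sc_def scaleC_add_left)

lemma sc_mult: "sc (c * d) = (sc c * sc d :: 'a::cstar_algebra)"
  by (simp add: sc_def scaleC_mult_left scaleC_scaleC)

lemma sc_one [simp]: "sc 1 = (1::'a::cstar_algebra)"
  by (simp add: sc_def scaleC_one)

lemma sc_zero [simp]: "sc 0 = (0::'a::cstar_algebra)"
  by (simp add: sc_def)

lemma sc_minus: "sc (- c) = (- sc c :: 'a::cstar_algebra)"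
proof -
  have "sc c + sc (- c) = (0::'a)" using sc_add[of c "-c", where 'a='a] by simp
  then show ?thesis by (metis minus_unique)
qed

lemma sc_diff: "sc (c - d) = (sc c - sc d :: 'a::cstar_algebra)"
  using sc_add[of c "-d", where 'a='a] sc_minus[of d, where 'a='a] by simp

lemma sc_of_real [simp]: "sc (complex_of_real r) = (of_real r :: 'a::cstar_algebra)"
  by (simp add: sc_def of_real_def scaleR_scaleC)

lemma scaleR_eq_sc: "scaleR r (x::'a::cstar_algebra) = sc (complex_of_real r) * x"
  by (simp add: scaleR_scaleC scaleC_eq_sc)

lemma norm_sc [simp]: "norm (sc c :: 'a::cstar_algebra) = cmod c"
  by (simp add: sc_def norm_scaleC)

lemma norm_scaleC': "norm (sc c * x :: 'a::cstar_algebra) = cmod c * norm x"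
  by (metis norm_scaleC scaleC_eq_sc)

lemma cstar_zero [simp]: "cstar (0::'a::cstar_algebra) = 0"
proof -
  have "cstar (0::'a) = cstar 0 + cstar 0" using cstar_add[of "0::'a" 0] by simp
  then show ?thesis by simp
qed

lemma cstar_minus: "cstar (- x :: 'a::cstar_algebra) = - cstar x"
proof -
  have "cstar x + cstar (- x) = 0" using cstar_add[of x "-x"] by simp
  then show ?thesis by (metis minus_unique)
qed

lemma cstar_diff: "cstar (x - y :: 'a::cstar_algebra) = cstar x - cstar y"
  using cstar_add[of x "-y"] cstar_minus[of y] by simp

lemma cstar_one [simp]: "cstar (1::'a::cstar_algebra) = 1"
proof -
  have "cstar (1::'a) = cstar 1 * 1" by simp
  then have "cstar (cstar (1::'a)) = cstar 1 * cstar (cstar 1)"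
    by (metis cstar_mult mult_1_right)
  then show ?thesis by (simp add: cstar_cstar)
qed

lemma cstar_sc [simp]: "cstar (sc c :: 'a::cstar_algebra) = sc (cnj c)"
  by (simp add: sc_def cstar_scaleC)

lemma cstar_of_real [simp]: "cstar (of_real r :: 'a::cstar_algebra) = of_real r"
  by (metis cstar_sc sc_of_real complex_cnj_complex_of_real)

lemma cstar_scaleR: "cstar (scaleR r x :: 'a::cstar_algebra) = scaleR r (cstar x)"
  unfolding scaleR_eq_sc cstar_mult cstar_sc complex_cnj_complex_of_real by (rule sc_comm[symmetric])

lemma norm_cstar [simp]: "norm (cstar x :: 'a::cstar_algebra) = norm x"
proof -
  have le: "norm y \<le> norm (cstar y)" for y :: 'a
  proof (cases "y = 0")
    case True then show ?thesis by simp
  next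
    case False
    have "norm y * norm y = norm (cstar y * y)" by (simp add: cstar_identity)
    also have "\<dots> \<le> norm (cstar y) * norm y" by (rule norm_mult_ineq)
    finally show ?thesis using False by simp
  qed
  show ?thesis using le[of x] le[of "cstar x"] by (simp add: cstar_cstar)
qed

lemma cstar_power: "cstar (x ^ n :: 'a::cstar_algebra) = cstar x ^ n"
proof (induction n)
  case 0 then show ?case by simp
next
  case (Suc n)
  have "cstar (x ^ Suc n) = cstar (x * x ^ n)" by simp
  also have "\<dots> = cstar x ^ n * cstar x" by (simp add: cstar_mult Suc)
  finally show ?case by (simp add: power_commutes)
qed

lemma cstar_sum: "cstar (sum f A :: 'a::cstar_algebra) = (\<Sum>i\<in>A. cstar (f i))"
  by (induction A rule: infinite_finite_induct) (simp_all add: cstar_add)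

lemma bounded_linear_cstar: "bounded_linear (cstar :: 'a::cstar_algebra \<Rightarrow> 'a)"
  by (rule bounded_linear_intro[where K=1]) (simp_all add: cstar_add cstar_scaleR)

lemma herm_sc_real: "herm (of_real r :: 'a::cstar_algebra)"
  by (simp add: herm_def)

lemma herm_add: "herm x \<Longrightarrow> herm y \<Longrightarrow> herm (x + y :: 'a::cstar_algebra)"
  by (simp add: herm_def cstar_add)

lemma herm_diff: "herm x \<Longrightarrow> herm y \<Longrightarrow> herm (x - y :: 'a::cstar_algebra)"
  by (simp add: herm_def cstar_diff)

lemma herm_scaleR: "herm x \<Longrightarrow> herm (scaleR r x :: 'a::cstar_algebra)"
  by (simp add: herm_def cstar_scaleR)

lemma herm_ofreal_mult: "herm x \<Longrightarrow> herm (of_real r * x :: 'a::cstar_algebra)"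
  by (metis herm_scaleR scaleR_conv_of_real)

lemma herm_power: "herm x \<Longrightarrow> herm (x ^ n :: 'a::cstar_algebra)"
  by (simp add: herm_def cstar_power)

lemma herm_cstar_mult: "herm (cstar x * x :: 'a::cstar_algebra)"
  by (simp add: herm_def cstar_mult cstar_cstar)

lemma herm_mult_comm: "herm x \<Longrightarrow> herm y \<Longrightarrow> x * y = y * x \<Longrightarrow> herm (x * y :: 'a::cstar_algebra)"
  by (simp add: herm_def cstar_mult)

lemma norm_herm_sq: "herm x \<Longrightarrow> norm (x * x :: 'a::cstar_algebra) = norm x * norm x"
  by (metis herm_def cstar_identity)

lemma norm_herm_pow2: "herm x \<Longrightarrow> norm (x ^ (2 ^ k) :: 'a::cstar_algebra) = norm x ^ (2 ^ k)"
proof (induction k)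
  case 0 then show ?case by simp
next
  case (Suc k)
  have "x ^ (2 ^ Suc k) = x ^ (2 ^ k) * x ^ (2 ^ k)"
    by (simp add: power_add[symmetric] mult_2)
  then have "norm (x ^ (2 ^ Suc k)) = norm (x ^ (2 ^ k)) * norm (x ^ (2 ^ k))"
    using norm_herm_sq[OF herm_power[OF Suc.prems]] by simp
  then show ?case using Suc by (simp add: power_mult[symmetric] power2_eq_square[symmetric] power_mult_distrib mult.commute)
qed

definition inv_el :: "'a::cstar_algebra \<Rightarrow> bool" where
  "inv_el x \<longleftrightarrow> (\<exists>y. x * y = 1 \<and> y * x = 1)"

definition invof :: "'a::cstar_algebra \<Rightarrow> 'a" where
  "invof x = (SOME y. x * y = 1 \<and> y * x = 1)"

lemma invof: "inv_el x \<Longrightarrow> x * invof x = 1 \<and> invof x * x = 1"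
  unfolding inv_el_def invof_def by (rule someI_ex)

lemma invof_r: "inv_el x \<Longrightarrow> x * invof x = 1" using invof by blast
lemma invof_l: "inv_el x \<Longrightarrow> invof x * x = 1" using invof by blast

lemma inv_unique: "x * y = 1 \<Longrightarrow> z * x = (1::'a::cstar_algebra) \<Longrightarrow> y = z"
  by (metis mult.assoc mult_1_left mult_1_right)

lemma inv_elI: "x * y = 1 \<Longrightarrow> z * x = (1::'a::cstar_algebra) \<Longrightarrow> inv_el x"
  unfolding inv_el_def by (metis inv_unique)

lemma invof_eq: "x * y = 1 \<Longrightarrow> y * x = (1::'a::cstar_algebra) \<Longrightarrow> invof x = y"
  by (metis inv_elI invof_l inv_unique)

lemma inv_el_mult: "inv_el a \<Longrightarrow> inv_el b \<Longrightarrow> inv_el (a * b :: 'a::cstar_algebra)"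
proof -
  assume a: "inv_el a" and b: "inv_el b"
  have "(a * b) * (invof b * invof a) = 1"
    by (metis a b invof_r mult.assoc mult_1_left)
  moreover have "(invof b * invof a) * (a * b) = 1"
    by (metis a b invof_l mult.assoc mult_1_left)
  ultimately show ?thesis unfolding inv_el_def by blast
qed

lemma invof_mult: "inv_el a \<Longrightarrow> inv_el b \<Longrightarrow> invof (a * b :: 'a::cstar_algebra) = invof b * invof a"
proof -
  assume a: "inv_el a" and b: "inv_el b"
  have "(a * b) * (invof b * invof a) = 1"
    by (metis a b invof_r mult.assoc mult_1_left)
  moreover have "(invof b * invof a) * (a * b) = 1"
    by (metis a b invof_l mult.assoc mult_1_left)
  ultimately show ?thesis by (rule invof_eq)
qed

lemma inv_el_factor: "x * y = y * x \<Longrightarrow> inv_el (x * y :: 'a::cstar_algebra) \<Longrightarrow> inv_el x"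
proof -
  assume c: "x * y = y * x" and i: "inv_el (x * y)"
  have "x * (y * invof (x * y)) = 1" by (metis i invof_r mult.assoc)
  moreover have "(invof (x * y) * y) * x = 1" by (metis c i invof_l mult.assoc)
  ultimately show ?thesis by (rule inv_elI)
qed

lemma invof_commute: "inv_el x \<Longrightarrow> a * x = x * a \<Longrightarrow> a * invof x = invof x * (a :: 'a::cstar_algebra)"
proof -
  assume i: "inv_el x" and c: "a * x = x * a"
  have "a * invof x = invof x * x * a * invof x" by (simp add: invof_l[OF i])
  also have "\<dots> = invof x * a * x * invof x" by (simp add: c mult.assoc)
  also have "\<dots> = invof x * a" by (simp add: mult.assoc invof_r[OF i])
  finally show ?thesis .
qed

lemma inv_el_invof: "inv_el x \<Longrightarrow> inv_el (invof x)"
  by (metis inv_elI invof)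

lemma invof_invof: "inv_el x \<Longrightarrow> invof (invof x) = x"
  by (metis invof invof_eq)

lemma inv_el_sc: "c \<noteq> 0 \<Longrightarrow> inv_el (sc c :: 'a::cstar_algebra)"
  by (rule inv_elI[where y="sc (1/c)" and z="sc (1/c)"]) (simp_all add: sc_mult[symmetric])

lemma invof_diff: "inv_el a \<Longrightarrow> inv_el b \<Longrightarrow>
   invof a - invof b = invof a * (b - a) * (invof b :: 'a::cstar_algebra)"
proof -
  assume a: "inv_el a" and b: "inv_el b"
  have "invof a * (b - a) * invof b = invof a * b * invof b - invof a * a * invof b"
    by (simp add: algebra_simps)
  also have "\<dots> = invof a - invof b"
    by (simp add: mult.assoc invof_r[OF b] invof_l[OF a])
  finally show ?thesis by simp
qed

section \<open>Neumann series\<close>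

lemma neumann:
  fixes x :: "'a::cstar_algebra"
  assumes x: "norm x < 1"
  shows "inv_el (1 - x) \<and> norm (invof (1 - x)) \<le> 1 / (1 - norm x)"
proof -
  have sg: "summable (\<lambda>n. norm x ^ n)" using x by (simp add: summable_geometric)
  have sn: "summable (\<lambda>n. norm (x ^ n))"
    by (rule summable_comparison_test[OF _ sg]) (auto intro: norm_power_ineq)
  then have s: "summable (\<lambda>n. x ^ n)" by (rule summable_norm_cancel)
  define S where "S = (\<Sum>n. x ^ n)"
  have lim: "(\<lambda>n. x ^ n) \<longlonglongrightarrow> 0" using x by (rule LIMSEQ_power_zero)
  have tel: "(\<lambda>n. x ^ Suc n - x ^ n) sums (0 - x ^ 0)"
    by (rule telescope_sums[OF lim])
  have "(\<lambda>n. (1 - x) * x ^ n) sums 1"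
  proof -
    have "(\<lambda>n. - (x ^ Suc n - x ^ n)) sums (- (0 - x ^ 0))" by (rule sums_minus[OF tel])
    moreover have "(\<lambda>n. - (x ^ Suc n - x ^ n)) = (\<lambda>n. (1 - x) * x ^ n)"
      by (auto simp: algebra_simps)
    ultimately show ?thesis by simp
  qed
  moreover have "(\<lambda>n. (1 - x) * x ^ n) sums ((1 - x) * S)"
    unfolding S_def by (rule sums_mult[OF summable_sums[OF s]])
  ultimately have r: "(1 - x) * S = 1" using sums_unique2 by blast
  have "(\<lambda>n. x ^ n * (1 - x)) sums 1"
  proof -
    have "(\<lambda>n. - (x ^ Suc n - x ^ n)) sums (- (0 - x ^ 0))" by (rule sums_minus[OF tel])
    moreover have "(\<lambda>n. - (x ^ Suc n - x ^ n)) = (\<lambda>n. x ^ n * (1 - x))"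
      by (auto simp: algebra_simps power_commutes)
    ultimately show ?thesis by simp
  qed
  moreover have "(\<lambda>n. x ^ n * (1 - x)) sums (S * (1 - x))"
    unfolding S_def by (rule sums_mult2[OF summable_sums[OF s]])
  ultimately have l: "S * (1 - x) = 1" using sums_unique2 by blast
  have i: "invof (1 - x) = S" using r l by (rule invof_eq)
  have "norm S \<le> (\<Sum>n. norm (x ^ n))" unfolding S_def by (rule summable_norm[OF sn])
  also have "\<dots> \<le> (\<Sum>n. norm x ^ n)"
    by (rule suminf_le[OF _ sn sg]) (rule norm_power_ineq)
  also have "\<dots> = 1 / (1 - norm x)" using x by (simp add: suminf_geometric)
  finally show ?thesis using r l i by (auto intro: inv_elI)
qed

lemma neumann_sc:
  fixes y :: "'a::cstar_algebra"
  assumes y: "norm y < cmod z"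
  shows "inv_el (sc z - y) \<and> norm (invof (sc z - y)) \<le> 1 / (cmod z - norm y)"
proof -
  have z: "z \<noteq> 0" using y norm_ge_zero[of y] by auto
  have ny: "norm (sc (1/z) * y) = norm y / cmod z" by (simp add: norm_scaleC' norm_divide)
  have lt: "norm (sc (1/z) * y) < 1" using y z by (simp add: ny)
  from neumann[OF lt] have n1: "inv_el (1 - sc (1/z) * y)"
     and n2: "norm (invof (1 - sc (1/z) * y)) \<le> 1 / (1 - norm y / cmod z)" by (auto simp: ny)
  have eq: "sc z - y = sc z * (1 - sc (1/z) * y)"
    using z by (simp add: algebra_simps mult.assoc[symmetric] sc_mult[symmetric])
  have iz: "inv_el (sc z :: 'a)" using z by (rule inv_el_sc)
  have inv: "inv_el (sc z - y)" unfolding eq by (rule inv_el_mult[OF iz n1])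
  have "invof (sc z - y) = invof (1 - sc (1/z) * y) * invof (sc z)"
    unfolding eq by (rule invof_mult[OF iz n1])
  also have "invof (sc z :: 'a) = sc (1/z)" by (rule invof_eq) (simp_all add: z sc_mult[symmetric])
  finally have "norm (invof (sc z - y)) = norm (invof (1 - sc (1/z) * y)) / cmod z"
    by (simp only: scaleC_eq_sc'[symmetric] norm_scaleC) (simp add: norm_divide)
  also have "\<dots> \<le> (1 / (1 - norm y / cmod z)) / cmod z"
    by (rule divide_right_mono[OF n2]) simp
  also have "\<dots> = 1 / (cmod z - norm y)"
    using z y by (simp add: field_simps)
  finally show ?thesis using inv by simp
qed

lemma perturb:
  fixes a c :: "'a::cstar_algebra"
  assumes a: "inv_el a" and small: "norm c * norm (invof a) < 1"
  shows "inv_el (a - c) \<and> norm (invof (a - c)) \<le> norm (invof a) / (1 - norm c * norm (invof a))"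
proof -
  let ?b = "invof a"
  have nbc: "norm (?b * c) \<le> norm c * norm ?b" by (metis norm_mult_ineq mult.commute)
  have lt: "norm (?b * c) < 1" using nbc small by linarith
  from neumann[OF lt] have w1: "inv_el (1 - ?b * c)"
    and w2: "norm (invof (1 - ?b * c)) \<le> 1 / (1 - norm (?b * c))" by auto
  have eq: "a - c = a * (1 - ?b * c)"
    by (simp add: algebra_simps mult.assoc[symmetric] invof_r[OF a])
  have inv: "inv_el (a - c)" unfolding eq by (rule inv_el_mult[OF a w1])
  have "invof (a - c) = invof (1 - ?b * c) * ?b" unfolding eq by (rule invof_mult[OF a w1])
  then have "norm (invof (a - c)) \<le> norm (invof (1 - ?b * c)) * norm ?b"
    by (simp add: norm_mult_ineq)
  also have "\<dots> \<le> (1 / (1 - norm (?b * c))) * norm ?b"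
    by (rule mult_right_mono[OF w2]) simp
  also have "\<dots> \<le> (1 / (1 - norm c * norm ?b)) * norm ?b"
    by (rule mult_right_mono) (use small nbc lt in \<open>auto intro!: divide_left_mono simp: \<close>)
  finally show ?thesis using inv by simp
qed

lemma inv_el_minus: "inv_el x \<Longrightarrow> inv_el (- x :: 'a::cstar_algebra)"
  unfolding inv_el_def by (metis minus_mult_minus)

lemma inv_el_minus_iff: "inv_el (- x :: 'a::cstar_algebra) \<longleftrightarrow> inv_el x"
  by (metis inv_el_minus minus_minus)

lemma herm_real_spec:
  fixes h :: "'a::cstar_algebra"
  assumes h: "herm h" and z: "Im z \<noteq> 0"
  shows "inv_el (h - sc z)"
proof -
  define b where "b = Im z"
  define w where "w = h - of_real (Re z)"
  have hw: "herm w" unfolding w_def by (intro herm_diff h herm_sc_real)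
  have b0: "b \<noteq> 0" using z b_def by simp
  define t where "t = (norm w ^ 2 + 1) / (2 * b)"
  have bt: "2 * b * t = norm w ^ 2 + 1" unfolding t_def using b0 by simp
  define y where "y = w + sc (\<i> * complex_of_real t)"
  have zsplit: "sc z = (of_real (Re z) + sc (\<i> * complex_of_real b) :: 'a)"
  proof -
    have "z = complex_of_real (Re z) + \<i> * complex_of_real b" unfolding b_def by (simp add: complex_eq_iff)
    then show ?thesis by (metis sc_add sc_of_real)
  qed
  have eq: "h - sc z = - (sc (\<i> * complex_of_real (b + t)) - y)"
    unfolding y_def w_def zsplit by (simp add: sc_add[symmetric] algebra_simps)
  have cy: "cstar y = w - sc (\<i> * complex_of_real t)"
    unfolding y_def using hw by (simp add: herm_def cstar_add sc_minus)
  have "cstar y * y = w * w + w * sc (\<i> * complex_of_real t) - sc (\<i> * complex_of_real t) * w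
          - sc (\<i> * complex_of_real t) * sc (\<i> * complex_of_real t)"
    by (simp only: cy) (simp add: y_def algebra_simps)
  also have "\<dots> = w * w + of_real (t ^ 2)"
  proof -
    have "sc (\<i> * complex_of_real t) * sc (\<i> * complex_of_real t) = (- of_real (t ^ 2) :: 'a)"
    proof -
      have "\<i> * complex_of_real t * (\<i> * complex_of_real t) = - complex_of_real (t ^ 2)"
        by (simp add: power2_eq_square mult.commute mult.left_commute)
      then show ?thesis by (simp only: sc_mult[symmetric] sc_minus sc_of_real)
    qed
    then show ?thesis using sc_comm[of "\<i> * complex_of_real t" w] by simp
  qed
  finally have "norm y * norm y = norm (w * w + of_real (t ^ 2))" by (simp add: cstar_identity[symmetric])
  also have "\<dots> \<le> norm (w * w) + norm (of_real (t ^ 2) :: 'a)" by (rule norm_triangle_ineq)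
  also have "\<dots> = norm w ^ 2 + t ^ 2"
  proof -
    have "norm (of_real (t ^ 2) :: 'a) = t ^ 2" by (simp only: norm_of_real) simp
    then show ?thesis using norm_herm_sq[OF hw] by (simp add: power2_eq_square)
  qed
  finally have ny: "norm y ^ 2 \<le> norm w ^ 2 + t ^ 2" by (simp add: power2_eq_square)
  have bt2: "(b + t) ^ 2 = b ^ 2 + (norm w ^ 2 + 1) + t ^ 2" using bt by (simp add: power2_eq_square algebra_simps)
  have "norm y ^ 2 < (b + t) ^ 2" unfolding bt2 using ny zero_le_power2[of b] by linarith
  then have "norm y < \<bar>b + t\<bar>" by (metis abs_norm_cancel power2_less_imp_less abs_ge_zero power2_abs)
  then have "norm y < cmod (\<i> * complex_of_real (b + t))" by (simp only: norm_mult norm_ii norm_of_real) simp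
  then have "inv_el (sc (\<i> * complex_of_real (b + t)) - y)" using neumann_sc by blast
  then show ?thesis unfolding eq by (rule inv_el_minus)
qed

section \<open>Spectral radius of Hermitian elements (Rickart's argument)\<close>

lemma pow_sc: "(sc c * x) ^ n = sc (c ^ n) * (x ^ n :: 'a::cstar_algebra)"
proof (induction n)
  case 0 then show ?case by simp
next
  case (Suc n)
  have "(sc c * x) ^ Suc n = sc c * x * (sc (c ^ n) * x ^ n)" by (simp add: Suc)
  also have "\<dots> = sc c * (x * sc (c ^ n)) * x ^ n" by (simp add: mult.assoc)
  also have "\<dots> = sc c * (sc (c ^ n) * x) * x ^ n" by (simp only: sc_comm)
  also have "\<dots> = sc (c ^ Suc n) * x ^ Suc n" by (simp add: mult.assoc sc_mult)
  finally show ?case .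
qed

lemma half_lemma:
  fixes u :: "'a::cstar_algebra"
  assumes a: "inv_el (1 - u)" and g: "inv_el (1 + u)"
  shows "inv_el (1 - u * u) \<and> invof (1 - u * u) = scaleR (1/2) (invof (1 - u) + invof (1 + u))
        \<and> invof (1 - u * u) = invof (1 - u) * invof (1 + u)"
proof -
  define A where "A = invof (1 - u)"
  define G where "G = invof (1 + u)"
  have f1: "1 - u * u = (1 - u) * (1 + u)" by (simp add: algebra_simps)
  have f2: "1 - u * u = (1 + u) * (1 - u)" by (simp add: algebra_simps)
  have i: "inv_el (1 - u * u)" unfolding f1 by (rule inv_el_mult[OF a g])
  have e1: "(1 - u * u) * A = 1 + u" unfolding f2 A_def by (simp add: mult.assoc invof_r[OF a])
  have e2: "A * (1 - u * u) = 1 + u" unfolding f1 A_def by (simp add: mult.assoc[symmetric] invof_l[OF a])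
  have e3: "(1 - u * u) * G = 1 - u" unfolding f1 G_def by (simp add: mult.assoc invof_r[OF g])
  have e4: "G * (1 - u * u) = 1 - u" unfolding f2 G_def by (simp add: mult.assoc[symmetric] invof_l[OF g])
  have "invof (1 - u * u) = scaleR (1/2) (A + G)"
  proof (rule invof_eq)
    show "(1 - u * u) * scaleR (1/2) (A + G) = 1"
      by (simp add: distrib_left e1 e3 scaleR_right.add[symmetric] scaleR_2[symmetric]
               del: scaleR_right.add)
    show "scaleR (1/2) (A + G) * (1 - u * u) = 1"
      by (simp add: distrib_right e2 e4 scaleR_right.add[symmetric] scaleR_2[symmetric]
               del: scaleR_right.add)
  qed
  moreover have "invof (1 - u * u) = A * G"
  proof (rule invof_eq)
    show "(1 - u * u) * (A * G) = 1"
      by (simp add: mult.assoc[symmetric] e1) (simp add: G_def invof_r[OF g])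
    show "A * G * (1 - u * u) = 1"
      by (simp add: mult.assoc e4) (simp add: A_def invof_l[OF a])
  qed
  ultimately show ?thesis using i A_def G_def by simp
qed

definition zeta :: "nat \<Rightarrow> complex" where "zeta k = cis (pi / 2 ^ k)"

lemma zeta_pow: "zeta k ^ (2 ^ k) = -1"
  unfolding zeta_def Complex.DeMoivre by simp

lemma cmod_zeta [simp]: "cmod (zeta k) = 1"
  unfolding zeta_def by (rule norm_cis)

definition Eop :: "'a::cstar_algebra \<Rightarrow> nat \<Rightarrow> complex \<Rightarrow> 'a" where
  "Eop h k l = invof (1 - (sc l * h) ^ (2 ^ k))"

lemma rot_pow: "(sc (l * zeta k) * h) ^ (2 ^ k) = - ((sc l * h) ^ (2 ^ k) :: 'a::cstar_algebra)"
  by (simp add: pow_sc power_mult_distrib zeta_pow sc_minus)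

lemma pow_Suc2: "(x::'a::cstar_algebra) ^ (2 ^ Suc k) = x ^ (2 ^ k) * x ^ (2 ^ k)"
  by (simp add: power_add[symmetric] mult_2)

lemma E_rec:
  fixes h :: "'a::cstar_algebra"
  assumes a: "inv_el (1 - (sc l * h) ^ (2 ^ k))" and g: "inv_el (1 - (sc (l * zeta k) * h) ^ (2 ^ k))"
  shows "inv_el (1 - (sc l * h) ^ (2 ^ Suc k))
     \<and> Eop h (Suc k) l = scaleR (1/2) (Eop h k l + Eop h k (l * zeta k))
     \<and> Eop h (Suc k) l = Eop h k l * Eop h k (l * zeta k)"
proof -
  let ?u = "(sc l * h) ^ (2 ^ k)"
  have g': "inv_el (1 + ?u)" using g by (simp add: rot_pow)
  note hl = half_lemma[OF a g']
  show ?thesis unfolding Eop_def pow_Suc2 rot_pow diff_minus_eq_add using hl by blast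
qed

lemma E_ind:
  fixes h :: "'a::cstar_algebra"
  assumes Rinv: "\<And>l. cmod l \<le> 1 \<Longrightarrow> inv_el (1 - sc l * h)"
    and Rb: "\<And>l. cmod l \<le> 1 \<Longrightarrow> norm (invof (1 - sc l * h)) \<le> M"
  shows "cmod l \<le> 1 \<Longrightarrow> inv_el (1 - (sc l * h) ^ (2 ^ k)) \<and> norm (Eop h k l) \<le> M"
proof (induction k arbitrary: l)
  case 0 then show ?case using Rinv Rb by (simp add: Eop_def)
next
  case (Suc k)
  have l2: "cmod (l * zeta k) \<le> 1" using Suc.prems by (simp add: norm_mult)
  note IH1 = Suc.IH[OF Suc.prems] and IH2 = Suc.IH[OF l2]
  note r = E_rec[OF conjunct1[OF IH1] conjunct1[OF IH2]]
  have "norm (Eop h (Suc k) l) \<le> (1/2) * (norm (Eop h k l) + norm (Eop h k (l * zeta k)))"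
    using r norm_triangle_ineq[of "Eop h k l" "Eop h k (l * zeta k)"] by simp
  also have "\<dots> \<le> M" using IH1 IH2 by simp
  finally show ?case using r by simp
qed

lemma E_rot:
  fixes h :: "'a::cstar_algebra"
  assumes Rinv: "\<And>l. cmod l \<le> 1 \<Longrightarrow> inv_el (1 - sc l * h)"
    and Rb: "\<And>l. cmod l \<le> 1 \<Longrightarrow> norm (invof (1 - sc l * h)) \<le> M"
    and al: "cmod \<alpha> = 1"
    and eps: "\<And>l. cmod l \<le> 1 \<Longrightarrow> norm (invof (1 - sc l * h) - invof (1 - sc (l * \<alpha>) * h)) \<le> \<epsilon>"
  shows "cmod l \<le> 1 \<Longrightarrow> norm (Eop h k l - Eop h k (l * \<alpha>)) \<le> \<epsilon>"
proof (induction k arbitrary: l)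
  case 0 then show ?case using eps by (simp add: Eop_def)
next
  case (Suc k)
  have c1: "cmod (l * zeta k) \<le> 1" "cmod (l * \<alpha>) \<le> 1" "cmod (l * \<alpha> * zeta k) \<le> 1"
    using Suc.prems al by (simp_all add: norm_mult)
  have I: "\<And>l k. cmod l \<le> 1 \<Longrightarrow> inv_el (1 - (sc l * h) ^ (2 ^ k)) \<and> norm (Eop h k l) \<le> M"
    by (rule E_ind[OF Rinv Rb])
  have r1: "Eop h (Suc k) l = scaleR (1/2) (Eop h k l + Eop h k (l * zeta k))"
    using E_rec[OF conjunct1[OF I[OF Suc.prems]] conjunct1[OF I[OF c1(1)]]] by simp
  have r2: "Eop h (Suc k) (l * \<alpha>) = scaleR (1/2) (Eop h k (l * \<alpha>) + Eop h k (l * \<alpha> * zeta k))"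
    using E_rec[OF conjunct1[OF I[OF c1(2)]] conjunct1[OF I[OF c1(3)]]] by simp
  have e: "l * \<alpha> * zeta k = l * zeta k * \<alpha>" by (simp add: mult_ac)
  have "Eop h (Suc k) l - Eop h (Suc k) (l * \<alpha>) =
     scaleR (1/2) ((Eop h k l - Eop h k (l * \<alpha>)) + (Eop h k (l * zeta k) - Eop h k (l * zeta k * \<alpha>)))"
    unfolding r1 r2 e by (simp add: algebra_simps)
  also have "norm \<dots> \<le> (1/2) * (norm (Eop h k l - Eop h k (l * \<alpha>)) + norm (Eop h k (l * zeta k) - Eop h k (l * zeta k * \<alpha>)))"
    using norm_triangle_ineq by simp
  also have "\<dots> \<le> \<epsilon>" using Suc.IH[OF Suc.prems] Suc.IH[OF c1(1)] by simp
  finally show ?case .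
qed

lemma Rinv:
  fixes h :: "'a::cstar_algebra"
  assumes h: "herm h" and n: "norm h = 1" and i1: "inv_el (1 - h)" and i2: "inv_el (1 + h)"
    and l: "cmod l \<le> 1"
  shows "inv_el (1 - sc l * h)"
proof (cases "cmod l < 1")
  case True
  have "norm (sc l * h) < 1" using True n by (simp add: norm_scaleC')
  then show ?thesis using neumann by blast
next
  case False
  then have l1: "cmod l = 1" using l by simp
  show ?thesis
  proof (cases "Im l = 0")
    case False
    have "Im (cnj l) \<noteq> 0" using False by simp
    then have "inv_el (h - sc (cnj l))" using h by (intro herm_real_spec)
    moreover have "inv_el (sc l :: 'a)" using l1 by (intro inv_el_sc) auto
    ultimately have "inv_el (sc l * (h - sc (cnj l)))" by (intro inv_el_mult)
    moreover have "sc l * (h - sc (cnj l)) = - (1 - sc l * h)"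
    proof -
      have "sc l * sc (cnj l) = (sc (complex_of_real (cmod l ^ 2)) :: 'a)"
        by (simp only: sc_mult[symmetric] complex_norm_square[symmetric])
      then have "sc l * sc (cnj l) = (1 :: 'a)" using l1 by simp
      then show ?thesis by (simp add: algebra_simps)
    qed
    ultimately have "inv_el (- (1 - sc l * h))" by simp
    then show ?thesis by (simp only: inv_el_minus_iff)
  next
    case True
    then have "l = complex_of_real (Re l)" by (simp add: complex_eq_iff)
    moreover have "\<bar>Re l\<bar> = 1" using l1 True by (simp add: cmod_def)
    moreover have "Re l = 1 \<or> Re l = -1" using \<open>\<bar>Re l\<bar> = 1\<close> by (auto simp: abs_if split: if_splits)
    ultimately have "l = 1 \<or> l = -1" by (metis of_real_1 of_real_minus)
    then show ?thesis
    proof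
      assume "l = 1" then show ?thesis using i1 by simp
    next
      assume "l = -1" then show ?thesis using i2 by (simp add: sc_minus)
    qed
  qed
qed

lemma norm_mult3: "norm (a * b * c :: 'a::cstar_algebra) \<le> norm a * norm b * norm c"
  by (meson mult_right_mono norm_ge_zero norm_mult_ineq order_trans)

lemma resolvent_cont:
  fixes h :: "'a::cstar_algebra"
  assumes n: "norm h = 1" and R: "\<And>l. cmod l \<le> 1 \<Longrightarrow> inv_el (1 - sc l * h)"
  shows "continuous_on (cball 0 1) (\<lambda>l. invof (1 - sc l * h))"
  unfolding continuous_on_iff
proof (intro ballI allI impI)
  fix l0 e assume l0: "l0 \<in> cball (0::complex) 1" and e: "(0::real) < e"
  define N where "N = norm (invof (1 - sc l0 * h))"
  have N0: "0 \<le> N" unfolding N_def by simp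
  define d where "d = min (1 / (2 * (N + 1))) (e / (2 * (N + 1) ^ 2))"
  have d0: "d > 0" unfolding d_def using e N0 by simp
  have i0: "inv_el (1 - sc l0 * h)" using R l0 by simp
  show "\<exists>d>0. \<forall>l\<in>cball 0 1. dist l l0 < d \<longrightarrow>
      dist (invof (1 - sc l * h)) (invof (1 - sc l0 * h)) < e"
  proof (intro exI conjI ballI impI)
    show "d > 0" by (rule d0)
    fix l assume l: "l \<in> cball (0::complex) 1" and dl: "dist l l0 < d"
    have il: "inv_el (1 - sc l * h)" using R l by simp
    have dd: "cmod (l - l0) < d" using dl by (simp add: dist_norm)
    have small: "cmod (l - l0) * N \<le> 1/2"
    proof -
      have "cmod (l - l0) * N \<le> (1 / (2 * (N + 1))) * N"
        using dd N0 unfolding d_def by (intro mult_right_mono) auto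
      also have "\<dots> \<le> 1/2" using N0 by (simp add: field_simps)
      finally show ?thesis .
    qed
    have nc: "norm (sc (l - l0) * h) = cmod (l - l0)" using n by (simp add: norm_scaleC')
    have eq: "1 - sc l0 * h - sc (l - l0) * h = 1 - sc l * h" by (simp add: sc_diff algebra_simps)
    have p: "norm (invof (1 - sc l * h)) \<le> N / (1 - cmod (l - l0) * N)"
      using perturb[OF i0, of "sc (l - l0) * h"] small unfolding nc eq N_def by simp
    have nl: "norm (invof (1 - sc l * h)) \<le> 2 * N"
    proof -
      have "N / (1 - cmod (l - l0) * N) \<le> N / (1/2)"
        using small N0 by (intro divide_left_mono) auto
      then show ?thesis using p by simp
    qed
    have "invof (1 - sc l * h) - invof (1 - sc l0 * h)
        = invof (1 - sc l * h) * ((1 - sc l0 * h) - (1 - sc l * h)) * invof (1 - sc l0 * h)"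
      by (rule invof_diff[OF il i0])
    also have "(1 - sc l0 * h) - (1 - sc l * h) = sc (l - l0) * h" by (simp add: sc_diff algebra_simps)
    finally have "norm (invof (1 - sc l * h) - invof (1 - sc l0 * h))
        \<le> norm (invof (1 - sc l * h)) * norm (sc (l - l0) * h) * N"
      unfolding N_def by (simp only: norm_mult3)
    also have "\<dots> \<le> (2 * N) * cmod (l - l0) * N"
      unfolding nc using nl N0 by (intro mult_right_mono) auto
    also have "\<dots> \<le> (2 * N) * (e / (2 * (N + 1) ^ 2)) * N"
      using dd N0 unfolding d_def by (intro mult_right_mono mult_left_mono) auto
    also have "\<dots> < e"
    proof -
      have "(2 * N) * (e / (2 * (N + 1) ^ 2)) * N = e * (N * N / ((N + 1) ^ 2))" by (simp add: field_simps)
      also have "N * N / ((N + 1) ^ 2) < 1"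
      proof -
        have "N * N < (N + 1) ^ 2" using N0 by (simp add: power2_eq_square algebra_simps)
        moreover have "0 < (N + 1) ^ 2" using N0 by simp
        ultimately show ?thesis by (simp add: divide_less_eq_1_pos)
      qed
      then have "e * (N * N / ((N + 1) ^ 2)) < e * 1" using e by (intro mult_strict_left_mono) auto
      finally show ?thesis by simp
    qed
    finally show "dist (invof (1 - sc l * h)) (invof (1 - sc l0 * h)) < e" by (simp add: dist_norm)
  qed
qed

lemma resolvent_bounded:
  fixes h :: "'a::cstar_algebra"
  assumes n: "norm h = 1" and R: "\<And>l. cmod l \<le> 1 \<Longrightarrow> inv_el (1 - sc l * h)"
  obtains M where "\<And>l. cmod l \<le> 1 \<Longrightarrow> norm (invof (1 - sc l * h)) \<le> M"
proof -
  have "compact ((\<lambda>l. invof (1 - sc l * h)) ` cball 0 1)"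
    by (rule compact_continuous_image[OF resolvent_cont[OF n R] compact_cball])
  then have "bounded ((\<lambda>l. invof (1 - sc l * h)) ` cball 0 1)" by (rule compact_imp_bounded)
  then obtain M where M: "\<forall>x\<in>(\<lambda>l. invof (1 - sc l * h)) ` cball 0 1. norm x \<le> M"
    unfolding bounded_iff by blast
  have "\<And>l. cmod l \<le> 1 \<Longrightarrow> norm (invof (1 - sc l * h)) \<le> M"
  proof -
    fix l :: complex assume "cmod l \<le> 1"
    then have "l \<in> cball 0 1" by (simp add: mem_cball_0)
    then show "norm (invof (1 - sc l * h)) \<le> M" using M by blast
  qed
  then show ?thesis using that by blast
qed

lemma pow_diff_le:
  fixes t s :: real
  assumes "0 \<le> t" "t \<le> 1" "0 \<le> s" "s \<le> 1"
  shows "\<bar>t ^ m - s ^ m\<bar> \<le> real m * \<bar>t - s\<bar>"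
proof (induction m)
  case 0 then show ?case by simp
next
  case (Suc m)
  have "t ^ Suc m - s ^ Suc m = t * (t ^ m - s ^ m) + s ^ m * (t - s)" by (simp add: algebra_simps)
  then have "\<bar>t ^ Suc m - s ^ Suc m\<bar> \<le> \<bar>t\<bar> * \<bar>t ^ m - s ^ m\<bar> + \<bar>s ^ m\<bar> * \<bar>t - s\<bar>"
    by (metis abs_mult abs_triangle_ineq)
  also have "\<dots> \<le> 1 * \<bar>t ^ m - s ^ m\<bar> + 1 * \<bar>t - s\<bar>"
    using assms by (intro add_mono mult_right_mono) (auto simp: power_le_one abs_if)
  also have "\<dots> \<le> real (Suc m) * \<bar>t - s\<bar>" using Suc by (simp add: algebra_simps)
  finally show ?case .
qed

lemma lipschitz_cont_real:
  fixes f :: "real \<Rightarrow> real"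
  assumes L: "0 \<le> L" and lip: "\<And>x y. x \<in> S \<Longrightarrow> y \<in> S \<Longrightarrow> \<bar>f x - f y\<bar> \<le> L * \<bar>x - y\<bar>"
  shows "continuous_on S f"
  unfolding continuous_on_iff
proof (intro ballI allI impI)
  fix x e assume x: "x \<in> S" and e: "(0::real) < e"
  show "\<exists>d>0. \<forall>y\<in>S. dist y x < d \<longrightarrow> dist (f y) (f x) < e"
  proof (intro exI conjI ballI impI)
    show "e / (L + 1) > 0" using e L by simp
    fix y assume y: "y \<in> S" and d: "dist y x < e / (L + 1)"
    have "\<bar>f y - f x\<bar> \<le> L * \<bar>y - x\<bar>" by (rule lip[OF y x])
    also have "\<dots> \<le> L * (e / (L + 1))" using d L by (intro mult_left_mono) (auto simp: dist_real_def)
    also have "\<dots> < e" using e L by (simp add: field_simps)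
    finally show "dist (f y) (f x) < e" by (simp add: dist_real_def)
  qed
qed

lemma E_diff:
  fixes h :: "'a::cstar_algebra"
  assumes n: "norm h = 1"
    and i1: "inv_el (1 - (sc l * h) ^ (2 ^ k))" and i2: "inv_el (1 - (sc l' * h) ^ (2 ^ k))"
    and b1: "norm (Eop h k l) \<le> M" and b2: "norm (Eop h k l') \<le> M"
  shows "norm (Eop h k l - Eop h k l') \<le> M * cmod (l' ^ (2 ^ k) - l ^ (2 ^ k)) * M"
proof -
  have M0: "0 \<le> M" using b1 norm_ge_zero order_trans by blast
  have "Eop h k l - Eop h k l' = Eop h k l * ((1 - (sc l' * h) ^ (2 ^ k)) - (1 - (sc l * h) ^ (2 ^ k))) * Eop h k l'"
    unfolding Eop_def by (rule invof_diff[OF i1 i2])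
  also have "(1 - (sc l' * h) ^ (2 ^ k)) - (1 - (sc l * h) ^ (2 ^ k)) = sc (l ^ (2 ^ k) - l' ^ (2 ^ k)) * h ^ (2 ^ k)"
    by (simp add: pow_sc sc_diff algebra_simps)
  finally have "norm (Eop h k l - Eop h k l') \<le> norm (Eop h k l) * norm (sc (l ^ (2 ^ k) - l' ^ (2 ^ k)) * h ^ (2 ^ k)) * norm (Eop h k l')"
    by (simp only: norm_mult3)
  also have "norm (sc (l ^ (2 ^ k) - l' ^ (2 ^ k)) * h ^ (2 ^ k) :: 'a) \<le> cmod (l' ^ (2 ^ k) - l ^ (2 ^ k))"
  proof -
    have "norm (h ^ (2 ^ k)) \<le> 1" using norm_power_ineq[of h "2^k"] n by simp
    then show ?thesis by (simp add: norm_scaleC' norm_minus_commute mult_left_le)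
  qed
  then have "norm (Eop h k l) * norm (sc (l ^ (2 ^ k) - l' ^ (2 ^ k)) * h ^ (2 ^ k)) * norm (Eop h k l')
      \<le> M * cmod (l' ^ (2 ^ k) - l ^ (2 ^ k)) * M"
    using b1 b2 M0 by (intro mult_mono) auto
  finally show ?thesis .
qed

lemma zeta_lim: "zeta \<longlonglongrightarrow> 1"
proof -
  have "(\<lambda>k. (1/2::real) ^ k) \<longlonglongrightarrow> 0" by (rule LIMSEQ_realpow_zero) simp_all
  then have "(\<lambda>k. pi * (1/2::real) ^ k) \<longlonglongrightarrow> pi * 0" by (rule tendsto_mult_left)
  moreover have "(\<lambda>k. pi * (1/2::real) ^ k) = (\<lambda>k. pi / 2 ^ k)"
    by (rule ext) (simp add: power_one_over)
  ultimately have p: "(\<lambda>k. pi / 2 ^ k) \<longlonglongrightarrow> 0" by simp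
  have c: "(\<lambda>k. cos (pi / 2 ^ k)) \<longlonglongrightarrow> cos 0" by (rule tendsto_cos[OF p])
  have s: "(\<lambda>k. sin (pi / 2 ^ k)) \<longlonglongrightarrow> sin 0" by (rule tendsto_sin[OF p])
  show ?thesis unfolding tendsto_complex_iff zeta_def using c s by simp
qed

lemma SR_core:
  fixes h :: "'a::cstar_algebra"
  assumes h: "herm h" and n: "norm h = 1" and i1: "inv_el (1 - h)" and i2: "inv_el (1 + h)"
  shows False
proof -
  have R: "\<And>l. cmod l \<le> 1 \<Longrightarrow> inv_el (1 - sc l * h)" using Rinv[OF h n i1 i2] .
  obtain M where Mb: "\<And>l. cmod l \<le> 1 \<Longrightarrow> norm (invof (1 - sc l * h)) \<le> M"
    using resolvent_bounded[OF n R] by blast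
  have M0: "0 \<le> M"
  proof -
    have "norm (invof (1 - sc 0 * h)) \<le> M" by (rule Mb) simp
    then show ?thesis by (rule order_trans[OF norm_ge_zero])
  qed
  define C where "C = (1/2 + M) * M ^ 2"
  have C0: "0 \<le> C" unfolding C_def using M0 by simp
  obtain k where kz: "cmod (zeta k - 1) < 1 / (8 * C + 1)"
  proof -
    have "1 / (8 * C + 1) > 0" using C0 by simp
    from LIMSEQ_D[OF zeta_lim this] obtain N where "\<forall>n\<ge>N. norm (zeta n - 1) < 1 / (8 * C + 1)" by blast
    then show ?thesis using that by blast
  qed
  define m where "m = (2::nat) ^ k"
  define \<epsilon> where "\<epsilon> = M ^ 2 * cmod (zeta k - 1)"
  define \<eta> where "\<eta> = (1/2 + M) * \<epsilon>"
  have e0: "0 \<le> \<epsilon>" unfolding \<epsilon>_def by simp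
  have eta0: "0 \<le> \<eta>" unfolding \<eta>_def using e0 M0 by simp
  have eta_small: "\<eta> < 1/8"
  proof -
    have "\<eta> = C * cmod (zeta k - 1)" unfolding \<eta>_def \<epsilon>_def C_def by simp
    also have "\<dots> \<le> C * (1 / (8 * C + 1))" using kz C0 by (intro mult_left_mono) auto
    also have "\<dots> < 1/8" using C0 by (simp add: field_simps)
    finally show ?thesis .
  qed
  have eps: "\<And>l. cmod l \<le> 1 \<Longrightarrow> norm (invof (1 - sc l * h) - invof (1 - sc (l * zeta k) * h)) \<le> \<epsilon>"
  proof -
    fix l :: complex assume l: "cmod l \<le> 1"
    have l2: "cmod (l * zeta k) \<le> 1" using l by (simp add: norm_mult)
    have "invof (1 - sc l * h) - invof (1 - sc (l * zeta k) * h)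
      = invof (1 - sc l * h) * ((1 - sc (l * zeta k) * h) - (1 - sc l * h)) * invof (1 - sc (l * zeta k) * h)"
      by (rule invof_diff[OF R[OF l] R[OF l2]])
    also have "(1 - sc (l * zeta k) * h) - (1 - sc l * h) = sc (l - l * zeta k) * h"
      by (simp add: sc_diff algebra_simps)
    finally have "norm (invof (1 - sc l * h) - invof (1 - sc (l * zeta k) * h))
       \<le> norm (invof (1 - sc l * h)) * norm (sc (l - l * zeta k) * h) * norm (invof (1 - sc (l * zeta k) * h))"
      by (simp only: norm_mult3)
    also have "\<dots> \<le> M * cmod (zeta k - 1) * M"
    proof (intro mult_mono)
      have "cmod (l - l * zeta k) = cmod l * cmod (zeta k - 1)"
      proof -
        have "l - l * zeta k = l * (1 - zeta k)" by (simp add: algebra_simps)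
        then show ?thesis by (simp add: norm_mult norm_minus_commute)
      qed
      also have "\<dots> \<le> cmod (zeta k - 1)" using l by (simp add: mult_left_le_one_le)
      finally show "norm (sc (l - l * zeta k) * h :: 'a) \<le> cmod (zeta k - 1)"
        using n by (simp add: norm_scaleC')
    qed (use Mb l l2 M0 in auto)
    finally show "norm (invof (1 - sc l * h) - invof (1 - sc (l * zeta k) * h)) \<le> \<epsilon>"
      unfolding \<epsilon>_def by (simp add: power2_eq_square mult_ac)
  qed
  have Erot: "\<And>l. cmod l \<le> 1 \<Longrightarrow> norm (Eop h k l - Eop h k (l * zeta k)) \<le> \<epsilon>"
    by (rule E_rot[OF R Mb _ eps]) simp_all
  have EI: "\<And>l j. cmod l \<le> 1 \<Longrightarrow> inv_el (1 - (sc l * h) ^ (2 ^ j)) \<and> norm (Eop h j l) \<le> M"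
    by (rule E_ind[OF R Mb])
  have idem: "\<And>l. cmod l \<le> 1 \<Longrightarrow> norm (Eop h k l - Eop h k l * Eop h k l) \<le> \<eta>"
  proof -
    fix l :: complex assume l: "cmod l \<le> 1"
    have l2: "cmod (l * zeta k) \<le> 1" using l by (simp add: norm_mult)
    define A where "A = Eop h k l"
    define G where "G = Eop h k (l * zeta k)"
    from E_rec[OF conjunct1[OF EI[OF l]] conjunct1[OF EI[OF l2]]]
    have r1: "Eop h (Suc k) l = scaleR (1/2) (A + G)" and r2: "Eop h (Suc k) l = A * G"
      unfolding A_def G_def by auto
    have r: "scaleR (1/2) (A + G) = A * G" using r1 r2 by simp
    have "A - A * A = scaleR (1/2) (A - G) + A * (G - A)"
    proof -
      have "A * (G - A) = scaleR (1/2) (A + G) - A * A" by (simp add: right_diff_distrib r)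
      moreover have "scaleR (1/2) (A - G) + (scaleR (1/2) (A + G) - A * A) = scaleR (1/2) A + scaleR (1/2) A - A * A"
        by (simp add: algebra_simps)
      moreover have "scaleR (1/2) A + scaleR (1/2) A = A"
        by (simp add: scaleR_left_distrib[symmetric])
      ultimately show ?thesis by simp
    qed
    then have "norm (A - A * A) \<le> norm (scaleR (1/2) (A - G)) + norm (A * (G - A))"
      by (metis norm_triangle_ineq)
    also have "\<dots> \<le> (1/2) * \<epsilon> + M * \<epsilon>"
    proof (rule add_mono)
      show "norm (scaleR (1/2) (A - G)) \<le> (1/2) * \<epsilon>"
        using Erot[OF l] unfolding A_def G_def by simp
      have "norm (A * (G - A)) \<le> norm A * norm (G - A)" by (rule norm_mult_ineq)
      also have "\<dots> \<le> M * \<epsilon>"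
        using EI[OF l] Erot[OF l] M0 unfolding A_def G_def
        by (intro mult_mono) (auto simp: norm_minus_commute)
      finally show "norm (A * (G - A)) \<le> M * \<epsilon>" .
    qed
    also have "\<dots> = \<eta>" unfolding \<eta>_def by (simp add: algebra_simps)
    finally show "norm (Eop h k l - Eop h k l * Eop h k l) \<le> \<eta>" unfolding A_def .
  qed
  define s where "s t = norm (Eop h k (complex_of_real t) - 1)" for t
  have s0: "s 0 = 0"
  proof -
    have "Eop h k 0 = 1" unfolding Eop_def by (rule invof_eq) (simp_all add: power_0_left)
    then show ?thesis unfolding s_def by simp
  qed
  have scont: "continuous_on {0..1} s"
  proof (rule lipschitz_cont_real[where L="M * M * real m"])
    show "0 \<le> M * M * real m" using M0 by simp
    fix x y :: real assume x: "x \<in> {0..1}" and y: "y \<in> {0..1}"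
    have cx: "cmod (complex_of_real x) \<le> 1" "cmod (complex_of_real y) \<le> 1" using x y by auto
    have "\<bar>s x - s y\<bar> \<le> norm (Eop h k (complex_of_real x) - Eop h k (complex_of_real y))"
      unfolding s_def using norm_triangle_ineq3[of "Eop h k (complex_of_real x) - 1" "Eop h k (complex_of_real y) - 1"] by simp
    also have "\<dots> \<le> M * cmod (complex_of_real y ^ (2 ^ k) - complex_of_real x ^ (2 ^ k)) * M"
      by (rule E_diff[OF n conjunct1[OF EI[OF cx(1)]] conjunct1[OF EI[OF cx(2)]]
              conjunct2[OF EI[OF cx(1)]] conjunct2[OF EI[OF cx(2)]]])
    also have "cmod (complex_of_real y ^ (2 ^ k) - complex_of_real x ^ (2 ^ k)) = \<bar>y ^ m - x ^ m\<bar>"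
      unfolding m_def by (simp only: of_real_power[symmetric] of_real_diff[symmetric] norm_of_real)
    also have "\<bar>y ^ m - x ^ m\<bar> \<le> real m * \<bar>x - y\<bar>"
      using pow_diff_le[of y x m] x y by (simp add: abs_minus_commute)
    finally show "\<bar>s x - s y\<bar> \<le> M * M * real m * \<bar>x - y\<bar>"
      using M0 by (simp add: mult_ac mult_left_mono mult_right_mono)
  qed
  have gap: "\<And>t. 0 \<le> t \<Longrightarrow> t \<le> 1 \<Longrightarrow> s t \<le> (s t) ^ 2 + \<eta>"
  proof -
    fix t :: real assume t: "0 \<le> t" "t \<le> 1"
    have ct: "cmod (complex_of_real t) \<le> 1" using t by simp
    define A where "A = Eop h k (complex_of_real t)"
    have f: "1 - A = (1 - A) * (1 - A) + (A - A * A)" by (simp add: algebra_simps)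
    have "norm (1 - A) = norm ((1 - A) * (1 - A) + (A - A * A))" by (simp only: f[symmetric])
    also have "\<dots> \<le> norm ((1 - A) * (1 - A)) + norm (A - A * A)" by (rule norm_triangle_ineq)
    also have "\<dots> \<le> norm (1 - A) ^ 2 + \<eta>"
      using idem[OF ct] norm_mult_ineq[of "1 - A" "1 - A"] unfolding A_def
      by (simp add: power2_eq_square)
    finally show "s t \<le> (s t) ^ 2 + \<eta>" unfolding s_def A_def by (simp add: norm_minus_commute)
  qed
  have s_nn: "\<And>t. 0 \<le> s t" unfolding s_def by simp
  have s1: "s 1 \<le> 2 * \<eta>"
  proof (rule ccontr)
    assume ns: "\<not> s 1 \<le> 2 * \<eta>"
    show False
    proof (cases "s 1 \<le> 1/2")
      case True
      have "s 1 \<le> (s 1) ^ 2 + \<eta>" using gap[of 1] by simp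
      moreover have "(s 1) ^ 2 \<le> s 1 * (1/2)" using True s_nn[of 1]
        unfolding power2_eq_square by (intro mult_left_mono) auto
      ultimately show False using ns by linarith
    next
      case False
      obtain t where t: "0 \<le> t" "t \<le> 1" "s t = 1/2"
      proof -
        have "s 0 \<le> 1/2" using s0 by simp
        moreover have "1/2 \<le> s 1" using False by simp
        ultimately have "\<exists>x. 0 \<le> x \<and> x \<le> 1 \<and> s x = 1/2"
          by (intro IVT'[OF _ _ _ scont]) simp_all
        then show ?thesis using that by blast
      qed
      have "s t \<le> (s t) ^ 2 + \<eta>" using gap t by simp
      then show False using t eta_small by (simp add: power2_eq_square)
    qed
  qed
  have c1: "cmod (1::complex) \<le> 1" by simp
  define A where "A = Eop h k 1"
  have iA: "inv_el (1 - h ^ m)" using conjunct1[OF EI[OF c1, of k]] unfolding m_def by simp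
  have Ainv: "A * (1 - h ^ m) = 1" unfolding A_def Eop_def m_def using invof_l iA unfolding m_def by simp
  have hm: "h ^ m = (A - 1) * (1 - h ^ m)"
  proof -
    have "(A - 1) * (1 - h ^ m) = A * (1 - h ^ m) - (1 - h ^ m)" by (simp only: left_diff_distrib mult_1_left)
    then show ?thesis unfolding Ainv by simp
  qed
  have nhm: "norm (h ^ m) = 1" unfolding m_def using norm_herm_pow2[OF h, of k] n by simp
  have "norm (h ^ m) = norm ((A - 1) * (1 - h ^ m))" using hm by (rule arg_cong)
  also have "\<dots> \<le> norm (A - 1) * norm (1 - h ^ m)" by (rule norm_mult_ineq)
  also have "\<dots> \<le> (2 * \<eta>) * 2"
  proof (rule mult_mono)
    show "norm (A - 1) \<le> 2 * \<eta>" using s1 unfolding s_def A_def by simp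
    show "norm (1 - h ^ m) \<le> 2" using norm_triangle_ineq4[of 1 "h ^ m"] nhm by simp
  qed (use eta0 in auto)
  finally show False using nhm eta_small by simp
qed

lemma SR:
  fixes h :: "'a::cstar_algebra"
  assumes h: "herm h" and h0: "h \<noteq> 0"
  shows "\<not> inv_el (of_real (norm h) - h) \<or> \<not> inv_el (of_real (norm h) + h)"
proof (rule ccontr)
  assume "\<not> ?thesis"
  then have i1: "inv_el (of_real (norm h) - h)" and i2: "inv_el (of_real (norm h) + h)" by auto
  define r where "r = norm h"
  have r0: "r > 0" using h0 unfolding r_def by simp
  define g where "g = of_real (1 / r) * h"
  have hg: "herm g" unfolding g_def by (rule herm_ofreal_mult[OF h])
  have ng: "norm g = 1"
  proof -
    have "norm g = norm (scaleR (1 / r) h)" unfolding g_def by (simp add: scaleR_conv_of_real)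
    also have "\<dots> = 1" using r0 unfolding r_def by simp
    finally show ?thesis .
  qed
  have rr: "of_real (1 / r) * of_real r = (1::'a)"
  proof -
    have "(1 / r) * r = 1" using r0 by simp
    then show ?thesis by (metis of_real_1 of_real_mult)
  qed
  have e1: "1 - g = of_real (1 / r) * (of_real r - h)" unfolding g_def
    by (simp only: right_diff_distrib rr)
  have e2: "1 + g = of_real (1 / r) * (of_real r + h)" unfolding g_def
    by (simp only: distrib_left rr)
  have ir: "inv_el (of_real (1 / r) :: 'a)"
  proof -
    have "complex_of_real (1/r) \<noteq> 0" using r0 by simp
    then have "inv_el (sc (complex_of_real (1/r)) :: 'a)" by (rule inv_el_sc)
    then show ?thesis by (simp only: sc_of_real)
  qed
  have "inv_el (1 - g)" unfolding e1 using inv_el_mult[OF ir] i1 r_def by simp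
  moreover have "inv_el (1 + g)" unfolding e2 using inv_el_mult[OF ir] i2 r_def by simp
  ultimately show False using SR_core[OF hg ng] by blast
qed

section \<open>Square root power series coefficients\<close>

definition cc :: "nat \<Rightarrow> real" where "cc n = ((1/2) gchoose n) * (- 1) ^ n"

lemma cc0 [simp]: "cc 0 = 1" by (simp add: cc_def)

lemma P_nonneg: "0 \<le> (- 1) ^ N * ((- (1/2::real)) gchoose N)"
proof -
  have "(- (1/2::real)) gchoose N = (- 1) ^ N * ((1/2 + of_nat N - 1) gchoose N)"
    by (rule gbinomial_minus)
  then have e: "(- 1) ^ N * ((- (1/2::real)) gchoose N) = (1/2 + of_nat N - 1) gchoose N"
    by (simp add: power_mult_distrib[symmetric])
  have "((1/2 + of_nat N - 1 :: real) gchoose N) * fact N = (\<Prod>i = 0..<N. (1/2 + of_nat N - 1) - of_nat i :: real)"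
    by (rule gbinomial_mult_fact')
  moreover have "0 \<le> (\<Prod>i = 0..<N. (1/2 + of_nat N - 1) - of_nat i :: real)"
    by (intro prod_nonneg) auto
  ultimately have "0 \<le> ((1/2 + of_nat N - 1 :: real) gchoose N) * fact N" by simp
  then have "0 \<le> ((1/2 + of_nat N - 1 :: real) gchoose N)"
    using fact_gt_zero[of N, where 'a=real] by (auto simp: zero_le_mult_iff)
  then show ?thesis using e by simp
qed

lemma cc_partial: "(\<Sum>n\<le>N. cc n) = (- 1) ^ N * ((- (1/2::real)) gchoose N)"
  unfolding cc_def using gbinomial_sum_lower_neg[of "1/2::real" N] by simp

lemma cc_partial_nonneg: "0 \<le> (\<Sum>n\<le>N. cc n)"
  unfolding cc_partial by (rule P_nonneg)

lemma cc_nonpos: "0 < n \<Longrightarrow> cc n \<le> 0"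
proof -
  assume n: "0 < n"
  then obtain N where N: "n = Suc N" by (cases n) auto
  have "(1/2::real) gchoose n = ((1/2) / of_nat n) * ((1/2 - 1) gchoose (n - 1))"
    using n by (rule gbinomial_absorption')
  then have "cc n = - ((1/2) / of_nat n) * ((- 1) ^ N * ((- (1/2::real)) gchoose N))"
    unfolding cc_def N by simp
  moreover have "0 \<le> ((1/2) / of_nat n) * ((- 1) ^ N * ((- (1/2::real)) gchoose N))"
    using P_nonneg[of N] by simp
  ultimately show ?thesis by simp
qed

lemma cc_abs_partial: "(\<Sum>n<N. \<bar>cc (Suc n)\<bar>) \<le> 1"
proof -
  have "(\<Sum>n<N. \<bar>cc (Suc n)\<bar>) = - (\<Sum>n<N. cc (Suc n))"
    unfolding sum_negf[symmetric] by (intro sum.cong refl) (simp add: cc_nonpos abs_of_nonpos)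
  also have "(\<Sum>n<N. cc (Suc n)) = (\<Sum>n\<le>N. cc n) - 1"
    by (simp only: lessThan_Suc_atMost[symmetric] sum.lessThan_Suc_shift) simp
  finally show ?thesis using cc_partial_nonneg[of N] by simp
qed

lemma summable_cc_Suc: "summable (\<lambda>n. \<bar>cc (Suc n)\<bar>)"
  by (rule summableI_nonneg_bounded[where x=1]) (auto intro: cc_abs_partial)

lemma suminf_cc_Suc: "(\<Sum>n. \<bar>cc (Suc n)\<bar>) \<le> 1"
  by (rule suminf_le_const[OF summable_cc_Suc]) (rule cc_abs_partial)

lemma summable_cc: "summable (\<lambda>n. \<bar>cc n\<bar>)"
  using summable_cc_Suc summable_Suc_iff[where f="\<lambda>n. \<bar>cc n\<bar>"] by simp

lemma cc_conv: "(\<Sum>i\<le>k. cc i * cc (k - i)) = (if k = 0 then 1 else if k = 1 then -1 else 0)"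
proof -
  have "(\<Sum>i\<le>k. cc i * cc (k - i)) = (\<Sum>i\<le>k. ((1/2::real) gchoose i) * ((1/2) gchoose (k - i))) * (- 1) ^ k"
    unfolding cc_def sum_distrib_right
  proof (rule sum.cong)
    fix i assume "i \<in> {..k}"
    then have "(- 1 :: real) ^ i * (- 1) ^ (k - i) = (- 1) ^ k" by (simp add: power_add[symmetric])
    then show "((1 / 2::real) gchoose i) * (- 1) ^ i * (((1 / 2::real) gchoose (k - i)) * (- 1) ^ (k - i)) =
         ((1 / 2::real) gchoose i) * ((1 / 2::real) gchoose (k - i)) * (- 1) ^ k"
      by (metis (no_types, lifting) mult.assoc mult.left_commute)
  qed simp
  also have "(\<Sum>i\<le>k. ((1/2::real) gchoose i) * ((1/2) gchoose (k - i))) = (1/2 + 1/2) gchoose k"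
    using gbinomial_Vandermonde[of "1/2::real" "1/2" k] by (simp add: atLeast0AtMost)
  also have "(1/2 + 1/2 :: real) gchoose k = of_nat (1 choose k)"
    using binomial_gbinomial[of 1 k, where 'a=real] by simp
  finally show ?thesis
    by (cases k) (auto simp: binomial_eq_0)
qed

definition sqs :: "'a::cstar_algebra \<Rightarrow> 'a" where
  "sqs z = (\<Sum>n. scaleR (cc n) (z ^ n))"

lemma sqs_term_bound: "norm (z::'a::cstar_algebra) \<le> 1 \<Longrightarrow> norm (scaleR (cc n) (z ^ n)) \<le> \<bar>cc n\<bar>"
proof -
  assume z: "norm z \<le> 1"
  have "norm (z ^ n) \<le> norm z ^ n" by (rule norm_power_ineq)
  also have "\<dots> \<le> 1" using z by (simp add: power_le_one)
  finally show ?thesis by (simp add: mult_left_le)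
qed

lemma sqs_summable: "norm (z::'a::cstar_algebra) \<le> 1 \<Longrightarrow> summable (\<lambda>n. norm (scaleR (cc n) (z ^ n)))"
proof -
  assume z: "norm z \<le> 1"
  show ?thesis
  proof (rule summable_comparison_test'[where N=0, OF summable_cc])
    fix n :: nat
    show "norm (norm (scaleR (cc n) (z ^ n))) \<le> \<bar>cc n\<bar>" using sqs_term_bound[OF z, of n] by simp
  qed
qed

lemma sqs_sq:
  fixes z :: "'a::cstar_algebra"
  assumes z: "norm z \<le> 1"
  shows "sqs z * sqs z = 1 - z"
proof -
  have "sqs z * sqs z = (\<Sum>k. \<Sum>i\<le>k. scaleR (cc i) (z ^ i) * scaleR (cc (k - i)) (z ^ (k - i)))"
    unfolding sqs_def by (rule Cauchy_product[OF sqs_summable[OF z] sqs_summable[OF z]])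
  also have "\<dots> = (\<Sum>k. scaleR (if k = 0 then 1 else if k = 1 then -1 else 0) (z ^ k))"
  proof (rule arg_cong[where f=suminf], rule ext)
    fix k
    have "(\<Sum>i\<le>k. scaleR (cc i) (z ^ i) * scaleR (cc (k - i)) (z ^ (k - i)))
        = (\<Sum>i\<le>k. scaleR (cc i * cc (k - i)) (z ^ k))"
    proof (rule sum.cong)
      fix i assume "i \<in> {..k}"
      then have "z ^ i * z ^ (k - i) = z ^ k" by (simp add: power_add[symmetric])
      then show "scaleR (cc i) (z ^ i) * scaleR (cc (k - i)) (z ^ (k - i)) = scaleR (cc i * cc (k - i)) (z ^ k)"
        by simp
    qed simp
    also have "\<dots> = scaleR (\<Sum>i\<le>k. cc i * cc (k - i)) (z ^ k)" by (simp add: scaleR_sum_left)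
    finally show "(\<Sum>i\<le>k. scaleR (cc i) (z ^ i) * scaleR (cc (k - i)) (z ^ (k - i)))
        = scaleR (if k = 0 then 1 else if k = 1 then -1 else 0) (z ^ k)" by (simp only: cc_conv)
  qed
  also have "\<dots> = (\<Sum>k\<in>{0,1}. scaleR (if k = 0 then 1 else if k = 1 then -1 else 0) (z ^ k))"
    by (rule suminf_finite) auto
  also have "\<dots> = 1 - z" by simp
  finally show ?thesis .
qed

lemma sqs_herm:
  fixes z :: "'a::cstar_algebra"
  assumes h: "herm z" and z: "norm z \<le> 1"
  shows "herm (sqs z)"
proof -
  have s: "summable (\<lambda>n. scaleR (cc n) (z ^ n))" by (rule summable_norm_cancel[OF sqs_summable[OF z]])
  have "cstar (sqs z) = (\<Sum>n. cstar (scaleR (cc n) (z ^ n)))"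
    unfolding sqs_def by (rule bounded_linear.suminf[OF bounded_linear_cstar s])
  also have "\<dots> = sqs z" unfolding sqs_def using h
    by (simp add: cstar_scaleR cstar_power herm_def)
  finally show ?thesis unfolding herm_def .
qed

lemma comm_power: "x * z = z * x \<Longrightarrow> x * z ^ n = z ^ n * (x::'a::cstar_algebra)"
proof (induction n)
  case 0 then show ?case by simp
next
  case (Suc n)
  have "x * z ^ Suc n = (x * z) * z ^ n" by (simp add: mult.assoc)
  also have "\<dots> = z * (x * z ^ n)" using Suc.prems by (simp add: mult.assoc)
  also have "\<dots> = z ^ Suc n * x" using Suc by (simp add: mult.assoc)
  finally show ?case .
qed

lemma sqs_comm:
  fixes z x :: "'a::cstar_algebra"
  assumes c: "x * z = z * x" and z: "norm z \<le> 1"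
  shows "x * sqs z = sqs z * x"
proof -
  have s: "summable (\<lambda>n. scaleR (cc n) (z ^ n))" by (rule summable_norm_cancel[OF sqs_summable[OF z]])
  have "x * sqs z = (\<Sum>n. x * scaleR (cc n) (z ^ n))" unfolding sqs_def by (rule suminf_mult[OF s, symmetric])
  also have "\<dots> = (\<Sum>n. scaleR (cc n) (z ^ n) * x)" using comm_power[OF c] by simp
  also have "\<dots> = sqs z * x" unfolding sqs_def by (rule suminf_mult2[OF s, symmetric])
  finally show ?thesis .
qed

lemma sqs_norm:
  fixes z :: "'a::cstar_algebra"
  assumes z: "norm z \<le> 1"
  shows "norm (1 - sqs z) \<le> 1"
proof -
  have sn: "summable (\<lambda>n. norm (scaleR (cc n) (z ^ n)))" by (rule sqs_summable[OF z])
  have s: "summable (\<lambda>n. scaleR (cc n) (z ^ n))" by (rule summable_norm_cancel[OF sn])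
  have sn1: "summable (\<lambda>n. norm (scaleR (cc (Suc n)) (z ^ Suc n)))"
    using sn summable_Suc_iff[where f="\<lambda>n. norm (scaleR (cc n) (z ^ n))"] by simp
  have "(\<Sum>n. scaleR (cc (Suc n)) (z ^ Suc n)) = sqs z - 1"
    unfolding sqs_def using suminf_split_head[OF s] by simp
  then have "1 - sqs z = - (\<Sum>n. scaleR (cc (Suc n)) (z ^ Suc n))" by simp
  then have "norm (1 - sqs z) = norm (\<Sum>n. scaleR (cc (Suc n)) (z ^ Suc n))" by simp
  also have "\<dots> \<le> (\<Sum>n. norm (scaleR (cc (Suc n)) (z ^ Suc n)))" by (rule summable_norm[OF sn1])
  also have "\<dots> \<le> (\<Sum>n. \<bar>cc (Suc n)\<bar>)"
    by (rule suminf_le[OF _ sn1 summable_cc_Suc]) (rule sqs_term_bound[OF z])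
  also have "\<dots> \<le> 1" by (rule suminf_cc_Suc)
  finally show ?thesis .
qed

lemma ofr_comm: "of_real r * x = x * (of_real r :: 'a::cstar_algebra)"
  using sc_comm[of "complex_of_real r" x] by simp

lemma ab_ba_inv:
  fixes x y :: "'a::cstar_algebra"
  assumes mu: "\<mu> \<noteq> 0" and i: "inv_el (of_real \<mu> + x * y)"
  shows "inv_el (of_real \<mu> + y * x)"
proof -
  define W where "W = invof (of_real \<mu> + x * y)"
  have W1: "(scaleR \<mu> 1 + x * y) * W = 1" and W2: "W * (scaleR \<mu> 1 + x * y) = 1"
    unfolding W_def using invof[OF i] by (auto simp: of_real_def)
  define Z where "Z = scaleR (1 / \<mu>) (1 - y * W * x)"
  have "(scaleR \<mu> 1 + y * x) * (1 - y * W * x) = scaleR \<mu> 1 + y * x - y * ((scaleR \<mu> 1 + x * y) * W) * x"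
    by (simp add: algebra_simps)
  also have "\<dots> = scaleR \<mu> 1" by (simp add: W1)
  finally have r: "(scaleR \<mu> 1 + y * x) * Z = 1"
    unfolding Z_def using mu by simp
  have "(1 - y * W * x) * (scaleR \<mu> 1 + y * x) = scaleR \<mu> 1 + y * x - y * (W * (scaleR \<mu> 1 + x * y)) * x"
    by (simp add: algebra_simps)
  also have "\<dots> = scaleR \<mu> 1" by (simp add: W2)
  finally have l: "Z * (scaleR \<mu> 1 + y * x) = 1"
    unfolding Z_def using mu by simp
  have "inv_el (scaleR \<mu> 1 + y * x)" using r l by (rule inv_elI)
  then show ?thesis by (simp add: of_real_def)
qed

section \<open>Positive elements\<close>

definition pos :: "'a::cstar_algebra \<Rightarrow> bool" where
  "pos x \<longleftrightarrow> herm x \<and> (\<forall>\<mu>>0. inv_el (x + of_real \<mu>))"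

lemma pos_herm: "pos x \<Longrightarrow> herm x" by (simp add: pos_def)

lemma pos_inv: "pos x \<Longrightarrow> \<mu> > 0 \<Longrightarrow> inv_el (x + of_real \<mu>)" by (simp add: pos_def)

lemma pos_normI:
  fixes x :: "'a::cstar_algebra"
  assumes h: "herm x" and l: "0 \<le> lam" and n: "norm (of_real lam - x) \<le> lam"
  shows "pos x"
  unfolding pos_def
proof (intro conjI allI impI h)
  fix \<mu> :: real assume mu: "\<mu> > 0"
  have "norm (of_real lam - x) < cmod (complex_of_real (lam + \<mu>))" using n l mu by (simp only: norm_of_real; simp)
  then have "inv_el (sc (complex_of_real (lam + \<mu>)) - (of_real lam - x))" using neumann_sc by blast
  moreover have "sc (complex_of_real (lam + \<mu>)) - (of_real lam - x) = x + (of_real \<mu> :: 'a)"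
    by (simp only: sc_of_real) (simp add: algebra_simps)
  ultimately show "inv_el (x + of_real \<mu>)" by metis
qed

lemma pos_norm_char:
  fixes x :: "'a::cstar_algebra"
  assumes p: "pos x"
  shows "norm (of_real (norm x) - x) \<le> norm x"
proof (rule ccontr)
  assume c: "\<not> ?thesis"
  define g where "g = of_real (norm x) - x"
  have hg: "herm g" unfolding g_def by (intro herm_diff herm_sc_real pos_herm[OF p])
  have gn: "norm g > norm x" using c unfolding g_def by simp
  then have g0: "g \<noteq> 0" using norm_ge_zero[of x] by auto
  have "inv_el (of_real (norm g) - g)"
  proof -
    have "inv_el (x + of_real (norm g - norm x))" using pos_inv[OF p, of "norm g - norm x"] gn by simp
    moreover have "x + of_real (norm g - norm x) = of_real (norm g) - g"
      unfolding g_def by (simp add: algebra_simps)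
    ultimately show ?thesis by metis
  qed
  moreover have "inv_el (of_real (norm g) + g)"
  proof -
    have "norm x < cmod (complex_of_real (norm g + norm x))" using gn by (simp only: norm_of_real; simp)
    then have "inv_el (sc (complex_of_real (norm g + norm x)) - x)" using neumann_sc by blast
    moreover have "sc (complex_of_real (norm g + norm x)) - x = of_real (norm g) + g"
      unfolding g_def by (simp only: sc_of_real) (simp add: algebra_simps)
    ultimately show ?thesis by simp
  qed
  ultimately show False using SR[OF hg g0] by blast
qed

lemma pos_add: "pos x \<Longrightarrow> pos y \<Longrightarrow> pos (x + y :: 'a::cstar_algebra)"
proof -
  assume px: "pos x" and py: "pos y"
  have "norm (of_real (norm x + norm y) - (x + y)) = norm ((of_real (norm x) - x) + (of_real (norm y) - y) :: 'a)"
    by (simp add: algebra_simps)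
  also have "\<dots> \<le> norm (of_real (norm x) - x) + norm (of_real (norm y) - y :: 'a)" by (rule norm_triangle_ineq)
  also have "\<dots> \<le> norm x + norm y" using pos_norm_char[OF px] pos_norm_char[OF py] by simp
  finally have nn: "norm (of_real (norm x + norm y) - (x + y)) \<le> norm x + norm y" .
  show ?thesis by (rule pos_normI[OF herm_add[OF pos_herm[OF px] pos_herm[OF py]] _ nn]) simp
qed

lemma pos_scaleR: "pos x \<Longrightarrow> 0 \<le> r \<Longrightarrow> pos (scaleR r x :: 'a::cstar_algebra)"
proof -
  assume p: "pos x" and r: "0 \<le> r"
  have "norm (of_real (r * norm x) - scaleR r x) = norm (scaleR r (of_real (norm x) - x) :: 'a)"
    by (simp add: algebra_simps scaleR_conv_of_real)
  also have "\<dots> = r * norm (of_real (norm x) - x :: 'a)" using r by simp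
  also have "\<dots> \<le> r * norm x" using r pos_norm_char[OF p] by (intro mult_left_mono)
  finally have nn: "norm (of_real (r * norm x) - scaleR r x) \<le> r * norm x" .
  show ?thesis by (rule pos_normI[OF herm_scaleR[OF pos_herm[OF p]] _ nn]) (simp add: r)
qed

lemma pos_zero: "pos (0::'a::cstar_algebra)"
  by (rule pos_normI[where lam=0]) (simp_all add: herm_def)

lemma pos_sq:
  fixes h :: "'a::cstar_algebra"
  assumes h: "herm h"
  shows "pos (h * h)"
  unfolding pos_def
proof (intro conjI allI impI)
  show "herm (h * h)" using h by (simp add: herm_def cstar_mult)
  fix \<mu> :: real assume mu: "\<mu> > 0"
  define c where "c = Complex 0 (sqrt \<mu>)"
  have sm: "sqrt \<mu> > 0" using mu by simp
  have imc: "Im c \<noteq> 0" unfolding c_def using sm by simp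
  have i1: "inv_el (h - sc c)" using h imc by (intro herm_real_spec)
  have imc2: "Im (- c) \<noteq> 0" using imc by simp
  have i2: "inv_el (h - sc (- c))" using h imc2 by (intro herm_real_spec)
  have cc2: "sc c * sc c = (- of_real \<mu> :: 'a)"
  proof -
    have "c * c = - complex_of_real \<mu>" unfolding c_def using mu
      by (simp add: complex_eq_iff)
    then show ?thesis by (simp only: sc_mult[symmetric] sc_minus sc_of_real)
  qed
  have "(h - sc c) * (h - sc (- c)) = h * h - sc c * sc c + (h * sc c - sc c * h)"
    by (simp add: sc_minus algebra_simps)
  also have "\<dots> = h * h + of_real \<mu>" using sc_comm[of c h] cc2 by simp
  finally show "inv_el (h * h + of_real \<mu>)" using inv_el_mult[OF i1 i2] by simp
qed

lemma pos_normsub: "herm p \<Longrightarrow> pos (of_real (norm p) - p :: 'a::cstar_algebra)"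
  by (rule pos_normI[where lam="norm p"]) (simp_all add: herm_diff herm_sc_real)

lemma pos_le1:
  fixes q :: "'a::cstar_algebra"
  assumes p: "pos q" and n: "norm q \<le> 1"
  shows "norm (1 - q) \<le> 1"
proof (rule ccontr)
  assume c: "\<not> ?thesis"
  define g where "g = 1 - q"
  have hg: "herm g" unfolding g_def using herm_diff[OF herm_sc_real[of 1] pos_herm[OF p]] by simp
  have gn: "norm g > 1" using c unfolding g_def by simp
  then have g0: "g \<noteq> 0" by auto
  have "inv_el (of_real (norm g) - g)"
  proof -
    have "inv_el (q + of_real (norm g - 1))" using pos_inv[OF p, of "norm g - 1"] gn by simp
    moreover have "q + of_real (norm g - 1) = of_real (norm g) - g"
      unfolding g_def by (simp add: algebra_simps)
    ultimately show ?thesis by metis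
  qed
  moreover have "inv_el (of_real (norm g) + g)"
  proof -
    have "norm q < cmod (complex_of_real (norm g + 1))" using gn n by (simp only: norm_of_real; simp)
    then have "inv_el (sc (complex_of_real (norm g + 1)) - q)" using neumann_sc by blast
    moreover have "sc (complex_of_real (norm g + 1)) - q = of_real (norm g) + g"
      unfolding g_def by (simp only: sc_of_real) (simp add: algebra_simps)
    ultimately show ?thesis by simp
  qed
  ultimately show False using SR[OF hg g0] by blast
qed

lemma inv_el_ofreal: "r \<noteq> 0 \<Longrightarrow> inv_el (of_real r :: 'a::cstar_algebra)"
  using inv_el_sc[of "complex_of_real r", where 'a='a] by simp

lemma inv_el_scaleR: "r \<noteq> 0 \<Longrightarrow> inv_el x \<Longrightarrow> inv_el (scaleR r x :: 'a::cstar_algebra)"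
  by (simp add: scaleR_conv_of_real inv_el_mult inv_el_ofreal)

lemma pos_sqrt:
  fixes q :: "'a::cstar_algebra"
  assumes p: "pos q"
  shows "\<exists>k. herm k \<and> k * k = q \<and> k * q = q * k"
proof -
  define r where "r = norm q + 1"
  have r0: "r > 0" unfolding r_def by (simp add: add_nonneg_pos)
  define q' where "q' = scaleR (1 / r) q"
  have pq': "pos q'" unfolding q'_def using r0 by (intro pos_scaleR[OF p]) simp
  have nq': "norm q' \<le> 1" unfolding q'_def using r0 by (simp add: r_def divide_le_eq)
  define z where "z = 1 - q'"
  have nz: "norm z \<le> 1" unfolding z_def by (rule pos_le1[OF pq' nq'])
  have hz: "herm z" unfolding z_def using herm_diff[OF herm_sc_real[of 1] pos_herm[OF pq']] by simp
  define k' where "k' = sqs z"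
  have hk': "herm k'" unfolding k'_def by (rule sqs_herm[OF hz nz])
  have kk': "k' * k' = q'" using sqs_sq[OF nz] unfolding k'_def z_def by simp
  have cq: "q' * z = z * q'" unfolding z_def by (simp add: algebra_simps)
  have ck': "q' * k' = k' * q'" unfolding k'_def by (rule sqs_comm[OF cq nz])
  define k where "k = scaleR (sqrt r) k'"
  have "herm k" unfolding k_def by (rule herm_scaleR[OF hk'])
  moreover have "k * k = q"
  proof -
    have "k * k = scaleR (sqrt r * sqrt r) (k' * k')" unfolding k_def by simp
    also have "\<dots> = scaleR r q'" using r0 kk' by simp
    also have "\<dots> = q" unfolding q'_def using r0 by simp
    finally show ?thesis .
  qed
  moreover have "k * q = q * k"
  proof -
    have qq: "q = scaleR r q'" unfolding q'_def using r0 by simp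
    show ?thesis unfolding qq k_def by (simp add: ck')
  qed
  ultimately show ?thesis by blast
qed

lemma pos_abs:
  fixes h :: "'a::cstar_algebra"
  assumes h: "herm h" and n: "norm h \<le> 1"
  shows "\<exists>a. pos a \<and> a * a = h * h \<and> a * h = h * a"
proof -
  have ps: "pos (h * h)" by (rule pos_sq[OF h])
  have nhh: "norm (h * h) \<le> 1"
    using norm_herm_sq[OF h] n by (simp add: mult_le_one)
  define z where "z = 1 - h * h"
  have nz: "norm z \<le> 1" unfolding z_def by (rule pos_le1[OF ps nhh])
  have hz: "herm z" unfolding z_def using herm_diff[OF herm_sc_real[of 1] pos_herm[OF ps]] by simp
  define a where "a = sqs z"
  have ha: "herm a" unfolding a_def by (rule sqs_herm[OF hz nz])
  have aa: "a * a = h * h" using sqs_sq[OF nz] unfolding a_def z_def by simp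
  have cz: "h * z = z * h" unfolding z_def by (simp add: algebra_simps mult.assoc)
  have ah: "h * a = a * h" unfolding a_def by (rule sqs_comm[OF cz nz])
  have pa: "pos a"
  proof (rule pos_normI[OF ha, of 1])
    show "norm (of_real 1 - a) \<le> 1" unfolding a_def using sqs_norm[OF nz] by simp
  qed simp
  show ?thesis using pa aa ah by auto
qed

lemma pos_diff_abs:
  fixes a h :: "'a::cstar_algebra"
  assumes pa: "pos a" and h: "herm h" and aa: "a * a = h * h" and ah: "a * h = h * a"
  shows "pos (a - h)"
  unfolding pos_def
proof (intro conjI allI impI)
  show "herm (a - h)" by (rule herm_diff[OF pos_herm[OF pa] h])
  fix \<mu> :: real assume mu: "\<mu> > 0"
  have e1: "(a - h + of_real \<mu>) * (a + h + of_real \<mu>) = scaleR (2 * \<mu>) (a + of_real (\<mu> / 2))"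
    by (simp add: of_real_def algebra_simps aa ah scaleR_2[symmetric] del: scaleR_2)
  have e2: "(a + h + of_real \<mu>) * (a - h + of_real \<mu>) = scaleR (2 * \<mu>) (a + of_real (\<mu> / 2))"
    by (simp add: of_real_def algebra_simps aa ah scaleR_2[symmetric] del: scaleR_2)
  have "inv_el (scaleR (2 * \<mu>) (a + of_real (\<mu> / 2)))"
    using mu by (intro inv_el_scaleR pos_inv[OF pa]) simp_all
  then show "inv_el (a - h + of_real \<mu>)"
    using inv_el_factor[of "a - h + of_real \<mu>" "a + h + of_real \<mu>"] e1 e2 by simp
qed

lemma herm_imag:
  fixes y :: "'a::cstar_algebra"
  shows "herm (sc \<i> * (y - cstar y))"
proof -
  have "cstar (sc \<i> * (y - cstar y)) = (cstar y - y) * sc (- \<i>)"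
    by (simp add: cstar_mult cstar_diff cstar_cstar)
  also have "\<dots> = sc (- \<i>) * (cstar y - y)" by (rule sc_comm[symmetric])
  also have "\<dots> = sc \<i> * (y - cstar y)" by (simp add: sc_minus algebra_simps)
  finally show ?thesis unfolding herm_def .
qed

lemma KV_normed:
  fixes v :: "'a::cstar_algebra"
  assumes nv: "norm (cstar v * v) \<le> 1"
  shows "pos (cstar v * v)"
proof -
  define h where "h = cstar v * v"
  have hh: "herm h" unfolding h_def by (rule herm_cstar_mult)
  obtain a where pa: "pos a" and aa: "a * a = h * h" and ah: "a * h = h * a"
    using pos_abs[OF hh nv[folded h_def]] by blast
  define d where "d = a - h"
  have pd: "pos d" unfolding d_def by (rule pos_diff_abs[OF pa hh aa ah])
  have hd: "herm d" by (rule pos_herm[OF pd])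
  have dd: "d * d = - scaleR 2 (h * d)"
    unfolding d_def by (simp add: algebra_simps aa ah scaleR_2)
  have hd2: "h * d = scaleR (- 1/2) (d * d)" using dd by simp
  obtain k where hk: "herm k" and kk: "k * k = d" using pos_sqrt[OF pd] by blast
  define m where "m = d * d * d"
  have pm: "pos m"
  proof -
    have "m = (k * k * k) * (k * k * k)" unfolding m_def kk[symmetric] by (simp add: mult.assoc)
    moreover have "herm (k * k * k)" using hk by (simp add: herm_def cstar_mult mult.assoc)
    ultimately show ?thesis using pos_sq by metis
  qed
  have hm: "herm m" by (rule pos_herm[OF pm])
  define y where "y = v * d"
  have yy: "cstar y * y = scaleR (- 1/2) m"
  proof -
    have "cstar y * y = d * h * d" unfolding y_def h_def using hd by (simp add: cstar_mult herm_def mult.assoc)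
    also have "\<dots> = d * (h * d)" by (simp add: mult.assoc)
    also have "\<dots> = scaleR (- 1/2) m" unfolding hd2 m_def by (simp add: mult.assoc)
    finally show ?thesis .
  qed
  define p1 where "p1 = y + cstar y"
  define p2 where "p2 = sc \<i> * (y - cstar y)"
  have hp1: "herm p1" unfolding p1_def herm_def by (simp add: cstar_add cstar_cstar add.commute)
  have hp2: "herm p2" unfolding p2_def by (rule herm_imag)
  have p22: "p2 * p2 = - ((y - cstar y) * (y - cstar y))"
  proof -
    have "p2 * p2 = sc \<i> * ((y - cstar y) * sc \<i>) * (y - cstar y)" unfolding p2_def by (simp add: mult.assoc)
    also have "\<dots> = sc \<i> * (sc \<i> * (y - cstar y)) * (y - cstar y)" by (simp only: sc_comm[of \<i> "y - cstar y", symmetric])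
    also have "\<dots> = sc (\<i> * \<i>) * ((y - cstar y) * (y - cstar y))" by (simp only: sc_mult mult.assoc)
    also have "\<dots> = - ((y - cstar y) * (y - cstar y))" by (simp add: sc_minus)
    finally show ?thesis .
  qed
  have yys: "y * cstar y = scaleR (1/2) (p1 * p1 + p2 * p2 + m)"
  proof -
    have "p1 * p1 + p2 * p2 = scaleR 2 (y * cstar y) + scaleR 2 (cstar y * y)"
      unfolding p22 p1_def by (simp add: algebra_simps scaleR_2)
    then have "p1 * p1 + p2 * p2 + m = scaleR 2 (y * cstar y)" unfolding yy by (simp add: algebra_simps)
    then show ?thesis by simp
  qed
  have pyy: "pos (y * cstar y)" unfolding yys
    by (rule pos_scaleR[OF pos_add[OF pos_add[OF pos_sq[OF hp1] pos_sq[OF hp2]] pm]]) simp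
  have inv1: "\<And>\<mu>. \<mu> > 0 \<Longrightarrow> inv_el (of_real \<mu> - scaleR (1/2) m)"
  proof -
    fix \<mu> :: real assume mu: "\<mu> > 0"
    have "inv_el (y * cstar y + of_real \<mu>)" by (rule pos_inv[OF pyy mu])
    then have i2: "inv_el (of_real \<mu> + y * cstar y)" by (simp add: add.commute)
    have mu0: "\<mu> \<noteq> 0" using mu by simp
    have "inv_el (of_real \<mu> + cstar y * y)" using mu0 i2 by (rule ab_ba_inv)
    then show "inv_el (of_real \<mu> - scaleR (1/2) m)" unfolding yy by simp
  qed
  have m0: "m = 0"
  proof (rule ccontr)
    assume m0: "m \<noteq> 0"
    have nm: "norm m > 0" using m0 by simp
    have "inv_el (of_real (norm m) - m)"
    proof -
      have "inv_el (scaleR 2 (of_real (norm m / 2) - scaleR (1/2) m))"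
        using inv1[of "norm m / 2"] nm by (intro inv_el_scaleR) simp_all
      moreover have "scaleR 2 (of_real (norm m / 2) - scaleR (1/2) m) = of_real (norm m) - m"
        by (simp add: algebra_simps of_real_def)
      ultimately show ?thesis by metis
    qed
    moreover have "inv_el (of_real (norm m) + m)"
      using pos_inv[OF pm nm] by (simp add: add.commute)
    ultimately show False using SR[OF hm m0] by blast
  qed
  have d0: "d = 0"
  proof -
    have "norm (d ^ (2 ^ 2)) = norm d ^ (2 ^ 2)" by (rule norm_herm_pow2[OF hd])
    moreover have "d ^ (2 ^ 2) = d * m" unfolding m_def by (simp add: numeral_eq_Suc mult.assoc)
    ultimately have "norm d ^ 4 = 0" using m0 by simp
    then show ?thesis by simp
  qed
  have "h = a" using d0 unfolding d_def by simp
  then show ?thesis using pa unfolding h_def by simp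
qed

lemma KV:
  fixes v :: "'a::cstar_algebra"
  shows "pos (cstar v * v)"
proof (cases "v = 0")
  case True then show ?thesis by (simp add: pos_zero)
next
  case False
  define r where "r = norm v"
  have r0: "r > 0" using False unfolding r_def by simp
  define w where "w = scaleR (1 / r) v"
  have e: "cstar w * w = scaleR (1 / r * (1 / r)) (cstar v * v)"
    unfolding w_def by (simp add: cstar_scaleR)
  have "norm (cstar w * w) = (1 / r * (1 / r)) * (r * r)"
    unfolding e using r0 by (simp add: cstar_identity r_def)
  also have "\<dots> = 1" using r0 by simp
  finally have "pos (cstar w * w)" by (intro KV_normed) simp
  then have "pos (scaleR (r * r) (cstar w * w))" by (rule pos_scaleR) simp
  moreover have "scaleR (r * r) (cstar w * w) = cstar v * v" unfolding e using r0 by simp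
  ultimately show ?thesis by simp
qed

lemma pos_sum_sq:
  fixes n :: nat and f :: "nat \<Rightarrow> 'a::cstar_algebra"
  shows "pos (\<Sum>k<n. cstar (f k) * f k)"
proof (induction n)
  case 0 then show ?case by (simp add: pos_zero)
next
  case (Suc n) then show ?case by (simp add: pos_add KV)
qed

lemma sc_left: "x * (sc c * y) = sc c * (x * y :: 'a::cstar_algebra)"
proof -
  have "x * (sc c * y) = (x * sc c) * y" by (simp add: mult.assoc)
  also have "x * sc c = sc c * x" by (rule sc_comm[symmetric])
  finally show ?thesis by (simp add: mult.assoc)
qed

lemma sesq:
  fixes x y x' y' :: "'a::cstar_algebra"
  shows "(cstar x + sc (cnj l) * cstar y) * (x' + sc l * y')
     = cstar x * x' + sc l * (cstar x * y') + sc (cnj l) * (cstar y * x') + sc (cnj l * l) * (cstar y * y')"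
proof -
  have "(cstar x + sc (cnj l) * cstar y) * (x' + sc l * y')
      = cstar x * x' + cstar x * (sc l * y') + sc (cnj l) * cstar y * x' + sc (cnj l) * cstar y * (sc l * y')"
    by (simp add: algebra_simps)
  also have "cstar x * (sc l * y') = sc l * (cstar x * y')" by (rule sc_left)
  also have "sc (cnj l) * cstar y * (sc l * y') = sc (cnj l) * (sc l * (cstar y * y'))"
    by (simp only: mult.assoc sc_left[of "cstar y" l y'])
  also have "\<dots> = sc (cnj l * l) * (cstar y * y')" by (simp add: sc_mult mult.assoc)
  finally show ?thesis by (simp add: mult.assoc)
qed

lemma cstar_lin: "cstar (x + sc l * y) = cstar x + sc (cnj l) * cstar (y :: 'a::cstar_algebra)"
  by (simp add: cstar_add cstar_mult sc_comm[of "cnj l" "cstar y"])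

section \<open>CP maps\<close>

context
  fixes T :: "'b::cstar_algebra \<Rightarrow> 'a::cstar_algebra"
  assumes cp: "cp_map T"
begin

lemma T_add: "T (x + y) = T x + T y" using cp by (simp add: cp_map_def)
lemma T_scaleC: "T (scaleC c x) = scaleC c (T x)" using cp by (simp add: cp_map_def)
lemma T_one: "T 1 = 1" using cp by (simp add: cp_map_def)
lemma T_pos: "mat_positive n X \<Longrightarrow> mat_positive n (\<lambda>i j. T (X i j))" using cp by (simp add: cp_map_def)

lemma T_zero: "T 0 = 0"
proof -
  have "T 0 = T 0 + T 0" using T_add[of 0 0] by simp
  then show ?thesis by simp
qed

lemma T_minus: "T (- x) = - T x"
proof -
  have "T x + T (- x) = 0" using T_add[of x "- x"] T_zero by simp
  then show ?thesis by (metis minus_unique)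
qed

lemma T_diff: "T (x - y) = T x - T y"
  using T_add[of x "- y"] T_minus[of y] by simp

lemma T_sc: "T (sc c * x) = sc c * T x"
  using T_scaleC[of c x] by (simp add: scaleC_eq_sc)

lemma T_lin: "T (x + sc l * y) = T x + sc l * T y"
  by (simp add: T_add T_sc)

lemma two_matrix:
  fixes x :: 'b
  obtains a0 a1 b0 b1 where
    "cstar a0 * a0 + cstar a1 * a1 = T 1" "cstar a0 * b0 + cstar a1 * b1 = T x"
    "cstar b0 * a0 + cstar b1 * a1 = T (cstar x)" "cstar b0 * b0 + cstar b1 * b1 = T (cstar x * x)"
proof -
  define Y :: "nat \<Rightarrow> nat \<Rightarrow> 'b" where "Y k j = (if k = 0 then (if j = 0 then 1 else x) else 0)" for k j
  define X where "X i j = (\<Sum>k<(2::nat). cstar (Y k i) * Y k j)" for i j :: nat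
  have "mat_positive 2 X" unfolding mat_positive_def by (rule exI[of _ Y]) (simp add: X_def)
  then have "mat_positive 2 (\<lambda>i j. T (X i j))" by (rule T_pos)
  then obtain W :: "nat \<Rightarrow> nat \<Rightarrow> 'a" where W: "\<And>i j. i < 2 \<Longrightarrow> j < 2 \<Longrightarrow> T (X i j) = (\<Sum>k<(2::nat). cstar (W k i) * W k j)"
    unfolding mat_positive_def by blast
  have s2: "\<And>f :: nat \<Rightarrow> 'a. (\<Sum>k<2. f k) = f 0 + f 1" by (simp add: numeral_2_eq_2)
  have s2b: "\<And>f :: nat \<Rightarrow> 'b. (\<Sum>k<2. f k) = f 0 + f 1" by (simp add: numeral_2_eq_2)
  have X00: "X 0 0 = 1" unfolding X_def s2b Y_def by simp
  have X01: "X 0 1 = x" unfolding X_def s2b Y_def by simp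
  have X10: "X 1 0 = cstar x" unfolding X_def s2b Y_def by simp
  have X11: "X 1 1 = cstar x * x" unfolding X_def s2b Y_def by simp
  show ?thesis
    apply (rule that[of "W 0 0" "W 1 0" "W 0 1" "W 1 1"])
    using W[of 0 0] W[of 0 1] W[of 1 0] W[of 1 1] unfolding s2 X00 X01 X10 X11 by simp_all
qed

lemma T_cstar: "T (cstar x) = cstar (T x)"
proof -
  obtain a0 a1 b0 b1 :: 'a where
    e2: "cstar a0 * b0 + cstar a1 * b1 = T x" and e3: "cstar b0 * a0 + cstar b1 * a1 = T (cstar x)"
    using two_matrix[of x] by blast
  have "cstar (T x) = cstar b0 * a0 + cstar b1 * a1" unfolding e2[symmetric]
    by (simp add: cstar_add cstar_mult cstar_cstar)
  then show ?thesis using e3 by simp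
qed

lemma schur2:
  fixes a0 a1 b0 b1 t :: 'a
  assumes e1: "cstar a0 * a0 + cstar a1 * a1 = 1" and e2: "cstar a0 * b0 + cstar a1 * b1 = t"
  shows "cstar (b0 - a0 * t) * (b0 - a0 * t) + cstar (b1 - a1 * t) * (b1 - a1 * t)
       = cstar b0 * b0 + cstar b1 * b1 - cstar t * t"
proof -
  have e3: "cstar b0 * a0 + cstar b1 * a1 = cstar t" unfolding e2[symmetric]
    by (simp add: cstar_add cstar_mult cstar_cstar)
  have "cstar (b0 - a0 * t) * (b0 - a0 * t) + cstar (b1 - a1 * t) * (b1 - a1 * t)
     = (cstar b0 * b0 + cstar b1 * b1) - (cstar b0 * a0 + cstar b1 * a1) * t
       - cstar t * (cstar a0 * b0 + cstar a1 * b1) + cstar t * (cstar a0 * a0 + cstar a1 * a1) * t"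
    by (simp add: cstar_diff cstar_mult algebra_simps)
  also have "\<dots> = cstar b0 * b0 + cstar b1 * b1 - cstar t * t" unfolding e1 e2 e3 by simp
  finally show ?thesis .
qed

lemma cp_form_pos: "pos (cp_form T z z)"
proof -
  obtain a0 a1 b0 b1 :: 'a where
    e1: "cstar a0 * a0 + cstar a1 * a1 = T 1" and e2: "cstar a0 * b0 + cstar a1 * b1 = T z"
    and e4: "cstar b0 * b0 + cstar b1 * b1 = T (cstar z * z)"
    using two_matrix[of z] by blast
  define v where "v k = (if k = 0 then b0 - a0 * T z else b1 - a1 * T z)" for k :: nat
  have "(\<Sum>k<2. cstar (v k) * v k) = cstar (b0 - a0 * T z) * (b0 - a0 * T z) + cstar (b1 - a1 * T z) * (b1 - a1 * T z)"
    unfolding v_def by (simp add: numeral_2_eq_2)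
  also have "\<dots> = cp_form T z z"
    unfolding schur2[OF e1[unfolded T_one] e2] e4 cp_form_def by simp
  finally show ?thesis using pos_sum_sq[where n=2 and f=v] by simp
qed

lemma cp_form_expand:
  "cp_form T (x + sc l * y) (x + sc l * y)
   = cp_form T x x + sc l * cp_form T x y + sc (cnj l) * cp_form T y x + sc (cnj l * l) * cp_form T y y"
proof -
  have "cp_form T (x + sc l * y) (x + sc l * y)
    = T (cstar x * x + sc l * (cstar x * y) + sc (cnj l) * (cstar y * x) + sc (cnj l * l) * (cstar y * y))
      - (cstar (T x) * T x + sc l * (cstar (T x) * T y) + sc (cnj l) * (cstar (T y) * T x) + sc (cnj l * l) * (cstar (T y) * T y))"
    unfolding cp_form_def cstar_lin T_lin sesq by simp
  also have "\<dots> = cp_form T x x + sc l * cp_form T x y + sc (cnj l) * cp_form T y x + sc (cnj l * l) * cp_form T y y"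
    unfolding cp_form_def by (simp add: T_add T_sc algebra_simps)
  finally show ?thesis .
qed

end

lemma pos_bound:
  fixes g :: "'a::cstar_algebra"
  assumes hg: "herm g" and s: "0 \<le> s" and p1: "pos (of_real s - g)" and p2: "pos (of_real s + g)"
  shows "norm g \<le> s"
proof (rule ccontr)
  assume c: "\<not> norm g \<le> s"
  then have gs: "norm g > s" by simp
  then have g0: "g \<noteq> 0" using s by auto
  have "inv_el (of_real (norm g) - g)"
  proof -
    have "inv_el ((of_real s - g) + of_real (norm g - s))" using pos_inv[OF p1, of "norm g - s"] gs by simp
    moreover have "(of_real s - g) + of_real (norm g - s) = of_real (norm g) - (g :: 'a)" by (simp add: algebra_simps)
    ultimately show ?thesis by metis
  qed
  moreover have "inv_el (of_real (norm g) + g)"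
  proof -
    have "inv_el ((of_real s + g) + of_real (norm g - s))" using pos_inv[OF p2, of "norm g - s"] gs by simp
    moreover have "(of_real s + g) + of_real (norm g - s) = of_real (norm g) + (g :: 'a)" by (simp add: algebra_simps)
    ultimately show ?thesis by metis
  qed
  ultimately show False using SR[OF hg g0] by blast
qed

lemma real_ineq:
  fixes x \<alpha> \<beta> :: real
  assumes H: "\<And>t. \<bar>t\<bar> * x \<le> \<alpha> + t ^ 2 * \<beta>" and a: "0 \<le> \<alpha>" and b: "0 \<le> \<beta>" and x: "0 \<le> x"
  shows "x \<le> 2 * (sqrt \<alpha> * sqrt \<beta>)"
proof (cases "\<beta> = 0")
  case True
  show ?thesis
  proof (rule ccontr)
    assume "\<not> ?thesis"
    then have xp: "x > 0" using a True by simp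
    have "\<bar>(\<alpha> + 1) / x\<bar> * x \<le> \<alpha>" using H[of "(\<alpha> + 1) / x"] True by simp
    then show False using xp a by simp
  qed
next
  case False
  then have bp: "\<beta> > 0" using b by simp
  show ?thesis
  proof (cases "\<alpha> = 0")
    case True
    show ?thesis
    proof (rule ccontr)
      assume "\<not> ?thesis"
      then have xp: "x > 0" using True by simp
      define t where "t = x / (2 * \<beta>)"
      have tp: "t > 0" unfolding t_def using xp bp by simp
      have "t * x \<le> t ^ 2 * \<beta>" using H[of t] True tp by simp
      then have "x \<le> t * \<beta>" using tp by (simp add: power2_eq_square mult.assoc)
      also have "t * \<beta> = x / 2" unfolding t_def using bp by simp
      finally show False using xp by simp
    qed
  next
    case False
    then have ap: "\<alpha> > 0" using a by simp
    define t where "t = sqrt \<alpha> / sqrt \<beta>"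
    have tp: "t > 0" unfolding t_def using ap bp by simp
    have t2: "t ^ 2 * \<beta> = \<alpha>" unfolding t_def using ap bp by (simp add: power_divide)
    have "t * x \<le> 2 * \<alpha>" using H[of t] tp t2 by simp
    then have "x \<le> 2 * \<alpha> / t" using tp by (simp add: field_simps)
    also have "2 * \<alpha> / t = 2 * (sqrt \<alpha> * sqrt \<beta>)"
    proof -
      have "\<alpha> = sqrt \<alpha> * sqrt \<alpha>" using ap by simp
      then show ?thesis unfolding t_def using ap bp by (simp add: field_simps)
    qed
    finally show ?thesis .
  qed
qed

theorem theorem3:
  fixes T :: "'b::cstar_algebra \<Rightarrow> 'a::cstar_algebra"
    and B B' :: 'b
  assumes "von_neumann_algebra TYPE('a)" and "von_neumann_algebra TYPE('b)"
    and "cp_map T"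
    and "cstar B = B" and "cstar B' = B'"
    and "B * B' = B' * B"
  shows "sqrt (norm (cp_form T B B)) * sqrt (norm (cp_form T B' B'))
           \<ge> 1 / 2 * norm (T B * T B' - T B' * T B)"
proof -
  note cp = assms(3)
  have hB: "cstar B = B" and hB': "cstar B' = B'" and cBB: "B * B' = B' * B" using assms by auto
  define A where "A = T B"
  define A' where "A' = T B'"
  have hA: "cstar A = A" unfolding A_def using T_cstar[OF cp, of B] hB by simp
  have hA': "cstar A' = A'" unfolding A'_def using T_cstar[OF cp, of B'] hB' by simp
  define a where "a = cp_form T B B"
  define c where "c = cp_form T B' B'"
  define K where "K = A * A' - A' * A"
  define H where "H = sc \<i> * K"
  have ha: "herm a" unfolding a_def by (rule pos_herm[OF cp_form_pos[OF cp]])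
  have hc: "herm c" unfolding c_def by (rule pos_herm[OF cp_form_pos[OF cp]])
  have hH: "herm H"
  proof -
    have "cstar (A * A') = A' * A" using hA hA' by (simp add: cstar_mult)
    then have "K = A * A' - cstar (A * A')" unfolding K_def by simp
    then show ?thesis unfolding H_def using herm_imag[of "A * A'"] by simp
  qed
  have nH: "norm H = norm K" unfolding H_def by (simp add: norm_scaleC')
  have expand: "cp_form T (B + sc (Complex 0 t) * B') (B + sc (Complex 0 t) * B')
      = a + scaleR (t ^ 2) c - scaleR t H" for t
  proof -
    define l where "l = Complex 0 t"
    have cl: "cnj l = - l" unfolding l_def by (simp add: complex_eq_iff)
    have cll: "cnj l * l = complex_of_real (t ^ 2)" unfolding l_def by (simp add: complex_eq_iff power2_eq_square)
    have XY: "cp_form T B B' - cp_form T B' B = - K"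
      unfolding cp_form_def K_def using hB hB' cBB hA hA' unfolding A_def A'_def by (simp add: algebra_simps)
    have sl: "sc l * K = scaleR t H"
    proof -
      have "l = \<i> * complex_of_real t" unfolding l_def by (simp add: complex_eq_iff)
      then have "sc l = sc \<i> * (of_real t :: 'a)" by (simp add: sc_mult)
      then have "sc l * K = sc \<i> * (of_real t * K)" by (simp add: mult.assoc)
      also have "\<dots> = sc \<i> * scaleR t K" by (simp add: scaleR_conv_of_real)
      also have "\<dots> = scaleR t H" unfolding H_def by simp
      finally show ?thesis .
    qed
    have "cp_form T (B + sc l * B') (B + sc l * B')
        = a + sc l * cp_form T B B' + sc (cnj l) * cp_form T B' B + sc (cnj l * l) * c"
      unfolding a_def c_def by (rule cp_form_expand[OF cp])
    also have "\<dots> = a + sc l * (cp_form T B B' - cp_form T B' B) + of_real (t ^ 2) * c"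
      by (simp only: cll sc_of_real) (simp add: cl sc_minus algebra_simps)
    also have "\<dots> = a + scaleR (t ^ 2) c - scaleR t H"
      unfolding XY by (simp add: sl scaleR_conv_of_real)
    finally show ?thesis unfolding l_def .
  qed
  have bound: "\<bar>t\<bar> * norm H \<le> norm a + t ^ 2 * norm c" for t
  proof -
    define p where "p = a + scaleR (t ^ 2) c"
    have hp: "herm p" unfolding p_def by (intro herm_add herm_scaleR ha hc)
    have q1: "pos (p - scaleR t H)" using cp_form_pos[OF cp, of "B + sc (Complex 0 t) * B'"]
      unfolding expand p_def by simp
    have q2: "pos (p + scaleR t H)" using cp_form_pos[OF cp, of "B + sc (Complex 0 (- t)) * B'"]
      unfolding expand p_def by simp
    have hg: "herm (scaleR t H)" by (rule herm_scaleR[OF hH])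
    have r1: "pos (of_real (norm p) - scaleR t H)"
    proof -
      have "pos ((of_real (norm p) - p) + (p - scaleR t H))" by (rule pos_add[OF pos_normsub[OF hp] q1])
      then show ?thesis by simp
    qed
    have r2: "pos (of_real (norm p) + scaleR t H)"
    proof -
      have "pos ((of_real (norm p) - p) + (p + scaleR t H))" by (rule pos_add[OF pos_normsub[OF hp] q2])
      then show ?thesis by simp
    qed
    have "norm (scaleR t H) \<le> norm p" by (rule pos_bound[OF hg norm_ge_zero r1 r2])
    also have "norm p \<le> norm a + norm (scaleR (t ^ 2) c)" unfolding p_def by (rule norm_triangle_ineq)
    finally show ?thesis by simp
  qed
  have "norm H \<le> 2 * (sqrt (norm a) * sqrt (norm c))"
    by (rule real_ineq[OF bound]) simp_all
  then show ?thesis unfolding nH K_def A_def A'_def a_def c_def by simp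
qed

end
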